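(* Let $f\in\mathcal{H}$ be strongly non-polynomial with $\log t\prec f(t)$. Then for all sufficiently large $k$, $$1\prec|f^{(k)}(t)|^{-1/k}\prec|f^{(k+1)}(t)|^{-1/(k+1)}\prec t.$$
   Context: $\mathcal{H}$ is a fixed Hardy field (subfield of germs at $+\infty$ of real functions, closed under differentiation) containing the logarithmico-exponential functions, closed under composition and compositional inversion. $f\in\mathcal{H}$ is strongly non-polynomial if there is a non-negative integer $d$ with $t^d\prec f(t)\prec t^{d+1}$. $f\prec g$ means $f(t)/g(t)\to0$ as $t\to\infty$. *)

theory Defs
  imports "HOL-Analysis.Analysis" "HOL-Library.Landau_Symbols"
begin

text \<open>Germs at +infinity are represented by functions real => real; a set H of such
functions is read modulo eventual equality at at_top.\<close>

definition germ_in :: "(real \<Rightarrow> real) \<Rightarrow> (real \<Rightarrow> real) set \<Rightarrow> bool" where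
  "germ_in f H \<longleftrightarrow> (\<exists>h\<in>H. eventually (\<lambda>x. h x = f x) at_top)"

definition hardy_field :: "(real \<Rightarrow> real) set \<Rightarrow> bool" where
  "hardy_field H \<longleftrightarrow>
     (\<forall>c. germ_in (\<lambda>_. c) H) \<and>
     (\<forall>f\<in>H. \<forall>g\<in>H. germ_in (\<lambda>x. f x + g x) H) \<and>
     (\<forall>f\<in>H. germ_in (\<lambda>x. - f x) H) \<and>
     (\<forall>f\<in>H. \<forall>g\<in>H. germ_in (\<lambda>x. f x * g x) H) \<and>
     (\<forall>f\<in>H. \<not> eventually (\<lambda>x. f x = 0) at_top \<longrightarrow>
        (\<exists>g\<in>H. eventually (\<lambda>x. f x * g x = 1) at_top)) \<and>
     (\<forall>f\<in>H. \<exists>f'\<in>H. eventually (\<lambda>x. (f has_real_derivative f' x) (at x)) at_top)"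

inductive_set LE_functions :: "(real \<Rightarrow> real) set" where
  LE_const: "(\<lambda>_. c) \<in> LE_functions"
| LE_id: "(\<lambda>x. x) \<in> LE_functions"
| LE_add: "f \<in> LE_functions \<Longrightarrow> g \<in> LE_functions \<Longrightarrow> (\<lambda>x. f x + g x) \<in> LE_functions"
| LE_minus: "f \<in> LE_functions \<Longrightarrow> (\<lambda>x. - f x) \<in> LE_functions"
| LE_mult: "f \<in> LE_functions \<Longrightarrow> g \<in> LE_functions \<Longrightarrow> (\<lambda>x. f x * g x) \<in> LE_functions"
| LE_inverse: "f \<in> LE_functions \<Longrightarrow> eventually (\<lambda>x. f x \<noteq> 0) at_top \<Longrightarrow>
     (\<lambda>x. inverse (f x)) \<in> LE_functions"
| LE_exp: "f \<in> LE_functions \<Longrightarrow> (\<lambda>x. exp (f x)) \<in> LE_functions"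
| LE_ln: "f \<in> LE_functions \<Longrightarrow> eventually (\<lambda>x. f x > 0) at_top \<Longrightarrow>
     (\<lambda>x. ln (f x)) \<in> LE_functions"

definition standing_hardy_field :: "(real \<Rightarrow> real) set \<Rightarrow> bool" where
  "standing_hardy_field H \<longleftrightarrow>
     hardy_field H \<and>
     (\<forall>g\<in>LE_functions. germ_in g H) \<and>
     (\<forall>f\<in>H. \<forall>g\<in>H. filterlim g at_top at_top \<longrightarrow> germ_in (\<lambda>x. f (g x)) H) \<and>
     (\<forall>f\<in>H. filterlim f at_top at_top \<longrightarrow>
        (\<exists>g\<in>H. filterlim g at_top at_top \<and> eventually (\<lambda>x. g (f x) = x) at_top))"

definition strongly_nonpolynomial :: "(real \<Rightarrow> real) \<Rightarrow> bool" where
  "strongly_nonpolynomial f \<longleftrightarrow>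
     (\<exists>d::nat. (\<lambda>t. t ^ d) \<in> o[at_top](f) \<and> f \<in> o[at_top](\<lambda>t. t ^ (d + 1)))"

end

theory Submission
  imports Defs
begin

lemma germ_in_cong:
  assumes "germ_in u H" "eventually (\<lambda>x. u x = v x) at_top"
  shows "germ_in v H"
proof -
  from assms(1) obtain h where "h \<in> H" "eventually (\<lambda>x. h x = u x) at_top"
    unfolding germ_in_def by blast
  have "eventually (\<lambda>x. h x = v x) at_top"
    using assms(2) \<open>eventually (\<lambda>x. h x = u x) at_top\<close> by eventually_elim simp
  with \<open>h \<in> H\<close> show ?thesis unfolding germ_in_def by blast
qed

lemma germ_in_H: "h \<in> H \<Longrightarrow> germ_in h H"
  unfolding germ_in_def by (intro bexI[of _ h]) simp_all

lemma hf: "standing_hardy_field H \<Longrightarrow> hardy_field H"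
  unfolding standing_hardy_field_def by blast

lemma germ_const: "standing_hardy_field H \<Longrightarrow> germ_in (\<lambda>_. c) H"
  using hf unfolding hardy_field_def by blast

lemma germ_add:
  assumes "standing_hardy_field H" "germ_in u H" "germ_in v H"
  shows "germ_in (\<lambda>x. u x + v x) H"
proof -
  from assms(2) obtain h where h: "h \<in> H" "eventually (\<lambda>x. h x = u x) at_top"
    unfolding germ_in_def by blast
  from assms(3) obtain g where g: "g \<in> H" "eventually (\<lambda>x. g x = v x) at_top"
    unfolding germ_in_def by blast
  have "germ_in (\<lambda>x. h x + g x) H" using hf[OF assms(1)] h g unfolding hardy_field_def by blast
  moreover have "eventually (\<lambda>x. h x + g x = u x + v x) at_top" using h(2) g(2) by eventually_elim simp
  ultimately show ?thesis by (rule germ_in_cong)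
qed

lemma germ_mult:
  assumes "standing_hardy_field H" "germ_in u H" "germ_in v H"
  shows "germ_in (\<lambda>x. u x * v x) H"
proof -
  from assms(2) obtain h where h: "h \<in> H" "eventually (\<lambda>x. h x = u x) at_top"
    unfolding germ_in_def by blast
  from assms(3) obtain g where g: "g \<in> H" "eventually (\<lambda>x. g x = v x) at_top"
    unfolding germ_in_def by blast
  have "germ_in (\<lambda>x. h x * g x) H" using hf[OF assms(1)] h g unfolding hardy_field_def by blast
  moreover have "eventually (\<lambda>x. h x * g x = u x * v x) at_top" using h(2) g(2) by eventually_elim simp
  ultimately show ?thesis by (rule germ_in_cong)
qed

lemma germ_minus:
  assumes "standing_hardy_field H" "germ_in u H"
  shows "germ_in (\<lambda>x. - u x) H"
proof -
  from assms(2) obtain h where h: "h \<in> H" "eventually (\<lambda>x. h x = u x) at_top"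
    unfolding germ_in_def by blast
  have "germ_in (\<lambda>x. - h x) H" using hf[OF assms(1)] h unfolding hardy_field_def by blast
  moreover have "eventually (\<lambda>x. - h x = - u x) at_top" using h(2) by eventually_elim simp
  ultimately show ?thesis by (rule germ_in_cong)
qed

lemma germ_diff:
  assumes "standing_hardy_field H" "germ_in u H" "germ_in v H"
  shows "germ_in (\<lambda>x. u x - v x) H"
  using germ_add[OF assms(1,2) germ_minus[OF assms(1,3)]] by simp

lemma germ_inverse:
  assumes "standing_hardy_field H" "germ_in u H"
  shows "germ_in (\<lambda>x. inverse (u x)) H"
proof -
  from assms(2) obtain h where h: "h \<in> H" "eventually (\<lambda>x. h x = u x) at_top"
    unfolding germ_in_def by blast
  show ?thesis
  proof (cases "eventually (\<lambda>x. h x = 0) at_top")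
    case True
    have ev0: "eventually (\<lambda>x. (0::real) = inverse (u x)) at_top" using True h(2) by eventually_elim simp
    show ?thesis by (rule germ_in_cong[OF germ_const[OF assms(1), of 0] ev0])
  next
    case False
    then obtain g where g: "g \<in> H" "eventually (\<lambda>x. h x * g x = 1) at_top"
      using hf[OF assms(1)] h(1) unfolding hardy_field_def by blast
    have "eventually (\<lambda>x. g x = inverse (u x)) at_top" using g(2) h(2)
      by eventually_elim (metis inverse_unique mult.commute)
    then show ?thesis by (rule germ_in_cong[OF germ_in_H[OF g(1)]])
  qed
qed

lemma germ_LE:
  assumes "standing_hardy_field H" "g \<in> LE_functions"
  shows "germ_in g H"
  using assms unfolding standing_hardy_field_def by blast

lemma germ_id: "standing_hardy_field H \<Longrightarrow> germ_in (\<lambda>x. x) H"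
  using germ_LE LE_id by blast

lemma germ_deriv:
  assumes "standing_hardy_field H" "germ_in u H"
  shows "\<exists>v. germ_in v H \<and> eventually (\<lambda>x. (u has_real_derivative v x) (at x)) at_top"
proof -
  from assms(2) obtain h where h: "h \<in> H" "eventually (\<lambda>x. h x = u x) at_top"
    unfolding germ_in_def by blast
  then obtain h' where h': "h' \<in> H" "eventually (\<lambda>x. (h has_real_derivative h' x) (at x)) at_top"
    using hf[OF assms(1)] unfolding hardy_field_def by blast
  from h(2) obtain N where N: "\<And>x. x \<ge> N \<Longrightarrow> h x = u x" unfolding eventually_at_top_linorder by blast
  have "eventually (\<lambda>x. x > N) at_top" by (rule eventually_gt_at_top)
  with h'(2) have "eventually (\<lambda>x. (u has_real_derivative h' x) (at x)) at_top"
  proof eventually_elim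
    case (elim x)
    have "eventually (\<lambda>y. y \<in> {N<..}) (nhds x)"
      using elim by (intro eventually_nhds_in_open) auto
    then have "eventually (\<lambda>y. h y = u y) (nhds x)"
      by eventually_elim (use N in auto)
    then show ?case using elim(1) DERIV_cong_ev[of x x h u "h' x" "h' x"] by simp
  qed
  then show ?thesis using germ_in_H[OF h'(1)] by blast
qed


lemma sign_trichotomy:
  assumes H: "standing_hardy_field H" and u: "germ_in u H"
  shows "eventually (\<lambda>x. u x = 0) at_top \<or> eventually (\<lambda>x. u x > 0) at_top \<or> eventually (\<lambda>x. u x < 0) at_top"
proof (cases "eventually (\<lambda>x. u x = 0) at_top")
  case False
  from u obtain h where h: "h \<in> H" "eventually (\<lambda>x. h x = u x) at_top"
    unfolding germ_in_def by blast
  have "\<not> eventually (\<lambda>x. h x = 0) at_top"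
  proof
    assume "eventually (\<lambda>x. h x = 0) at_top"
    with h(2) have "eventually (\<lambda>x. u x = 0) at_top" by eventually_elim simp
    with False show False by simp
  qed
  then obtain g where g: "eventually (\<lambda>x. h x * g x = 1) at_top"
    using hf[OF H] h(1) unfolding hardy_field_def by blast
  have nz: "eventually (\<lambda>x. u x \<noteq> 0) at_top" using g h(2) by eventually_elim auto
  obtain v where v: "eventually (\<lambda>x. (u has_real_derivative v x) (at x)) at_top"
    using germ_deriv[OF H u] by blast
  obtain N where N: "\<And>x. x \<ge> N \<Longrightarrow> u x \<noteq> 0 \<and> (u has_real_derivative v x) (at x)"
    using eventually_conj[OF nz v] unfolding eventually_at_top_linorder by blast
  have cont: "continuous_on {a..b} u" if "N \<le> a" for a b
  proof (intro continuous_at_imp_continuous_on ballI)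
    fix x assume "x \<in> {a..b}"
    then have "N \<le> x" using that by auto
    then show "isCont u x" using N[of x] DERIV_isCont by blast
  qed
  show ?thesis
  proof (cases "u N > 0")
    case True
    have "u x > 0" if "x \<ge> N" for x
    proof (rule ccontr)
      assume "\<not> u x > 0"
      then have "u x \<le> 0" by simp
      from IVT2'[of u x 0 N, OF this _ that cont] True obtain y where "N \<le> y" "y \<le> x" "u y = 0"
        by auto
      with N[of y] show False by auto
    qed
    then have "eventually (\<lambda>x. u x > 0) at_top" unfolding eventually_at_top_linorder by blast
    then show ?thesis by simp
  next
    case False
    then have "u N < 0" using N[of N] by auto
    have "u x < 0" if "x \<ge> N" for x
    proof (rule ccontr)
      assume "\<not> u x < 0"
      then have "u x \<ge> 0" by simp
      from IVT'[of u N 0 x, OF _ this that cont] \<open>u N < 0\<close> obtain y where "N \<le> y" "y \<le> x" "u y = 0"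
        by auto
      with N[of y] show False by auto
    qed
    then have "eventually (\<lambda>x. u x < 0) at_top" unfolding eventually_at_top_linorder by blast
    then show ?thesis by simp
  qed
qed simp

lemma sign_const:
  assumes H: "standing_hardy_field H" and u: "germ_in u H"
  shows "eventually (\<lambda>x. u x \<ge> c) at_top \<or> eventually (\<lambda>x. u x < c) at_top"
proof -
  have "germ_in (\<lambda>x. u x - c) H" by (rule germ_diff[OF H u germ_const[OF H]])
  from sign_trichotomy[OF H this] show ?thesis
    by (elim disjE) (auto elim: eventually_mono)
qed

lemma deriv_step:
  assumes H: "standing_hardy_field H" and u: "germ_in u H"
  shows "germ_in (deriv u) H \<and> eventually (\<lambda>x. (u has_real_derivative deriv u x) (at x)) at_top"
proof -
  obtain v where v: "germ_in v H" "eventually (\<lambda>x. (u has_real_derivative v x) (at x)) at_top"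
    using germ_deriv[OF H u] by blast
  have e: "eventually (\<lambda>x. v x = deriv u x) at_top" using v(2)
    by eventually_elim (simp add: DERIV_imp_deriv)
  have "eventually (\<lambda>x. (u has_real_derivative deriv u x) (at x)) at_top" using v(2) e
    by eventually_elim simp
  with germ_in_cong[OF v(1) e] show ?thesis by blast
qed

lemma D_germ:
  assumes H: "standing_hardy_field H" and f: "germ_in f H"
  shows "germ_in ((deriv ^^ k) f) H"
proof (induction k)
  case 0 then show ?case using f by simp
next
  case (Suc k) then show ?case using deriv_step[OF H Suc] by simp
qed

lemma D_deriv:
  assumes H: "standing_hardy_field H" and f: "germ_in f H"
  shows "eventually (\<lambda>x. ((deriv ^^ k) f has_real_derivative (deriv ^^ Suc k) f x) (at x)) at_top"
  using deriv_step[OF H D_germ[OF H f, of k]] by simp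

lemma mono_from_deriv:
  fixes w w' :: "real \<Rightarrow> real"
  assumes "\<And>x. x \<ge> N \<Longrightarrow> (w has_real_derivative w' x) (at x) \<and> w' x \<ge> 0" "N \<le> x" "x \<le> y"
  shows "w x \<le> w y"
  by (rule DERIV_nonneg_imp_nondecreasing[OF assms(3)]) (metis assms(1,2) order_trans)

lemma anti_from_deriv:
  fixes w w' :: "real \<Rightarrow> real"
  assumes "\<And>x. x \<ge> N \<Longrightarrow> (w has_real_derivative w' x) (at x) \<and> w' x \<le> 0" "N \<le> x" "x \<le> y"
  shows "w y \<le> w x"
  by (rule DERIV_nonpos_imp_nonincreasing[OF assms(3)]) (metis assms(1,2) order_trans)

lemma deriv_lnsq:
  assumes "(u has_real_derivative u') (at x)" "u x \<noteq> 0"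
  shows "((\<lambda>y. ln (u y ^ 2) / 2) has_real_derivative u' / u x) (at x)"
proof -
  have sq: "0 < u x * u x" using assms(2) by (metis linorder_neqE_linordered_idom mult_neg_neg mult_pos_pos)
  have "((\<lambda>y. ln (u y ^ 2) / 2) has_real_derivative (2 * u x * u' / (u x ^ 2)) / 2) (at x)"
    using assms sq by (auto intro!: derivative_eq_intros simp: power2_eq_square)
  moreover have "(2 * u x * u' / (u x ^ 2)) / 2 = u' / u x" using assms(2)
    by (simp add: power2_eq_square field_simps)
  ultimately show ?thesis by simp
qed

lemma lnsq_eq: "ln (a ^ 2) / 2 = ln \<bar>a\<bar>" for a :: real
proof -
  have "ln (a ^ 2) = ln (\<bar>a\<bar> ^ 2)" by simp
  also have "\<dots> = 2 * ln \<bar>a\<bar>" by (subst ln_realpow) simp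
  finally show ?thesis by simp
qed

lemma ln_ev_ge: "eventually (\<lambda>x. Z \<le> ln (x::real)) at_top"
  using ln_at_top unfolding filterlim_at_top by blast

lemma powr_contra:
  fixes b c C :: real
  assumes "eventually (\<lambda>x. x powr b \<le> C * x powr c) at_top" "c < b"
  shows False
proof -
  have "eventually (\<lambda>x::real. False) at_top"
    using assms(1) ln_ev_ge[of "(ln \<bar>C\<bar>) / (b - c) + 1"] eventually_gt_at_top[of 0]
  proof eventually_elim
    case (elim x)
    show False
    proof (cases "C > 0")
      case False
      then have "C * x powr c \<le> 0" by (simp add: mult_nonpos_nonneg)
      with elim(1) elim(3) show False by (smt (verit) powr_gt_zero)
    next
      case True
      have "ln (x powr b) \<le> ln (C * x powr c)" using elim(1) elim(3) True
        by (subst ln_le_cancel_iff) auto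
      then have "b * ln x \<le> ln C + c * ln x" using elim(3) True by (simp add: ln_mult)
      then have "(b - c) * ln x \<le> ln C" by (simp add: algebra_simps)
      moreover have "(b - c) * ((ln \<bar>C\<bar>) / (b - c) + 1) \<le> (b - c) * ln x"
        using elim(2) assms(2) by (intro mult_left_mono) auto
      moreover have "(b - c) * ((ln \<bar>C\<bar>) / (b - c) + 1) = ln C + (b - c)"
        using assms(2) True by (simp add: field_simps)
      ultimately show False using assms(2) by linarith
    qed
  qed
  then show False by simp
qed

lemma grow_lb:
  fixes u u' :: "real \<Rightarrow> real"
  assumes d: "eventually (\<lambda>x. (u has_real_derivative u' x) (at x)) at_top"
    and nz: "eventually (\<lambda>x. u x \<noteq> 0) at_top"
    and b: "eventually (\<lambda>x. b \<le> x * u' x / u x) at_top" and bb: "b' < b"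
  shows "eventually (\<lambda>x. x powr b' \<le> \<bar>u x\<bar>) at_top"
proof -
  define w where "w = (\<lambda>x. ln (u x ^ 2) / 2 - b * ln x)"
  obtain N where N: "\<And>x. x \<ge> N \<Longrightarrow> (u has_real_derivative u' x) (at x) \<and> u x \<noteq> 0 \<and> b \<le> x * u' x / u x \<and> x > 0"
    using eventually_conj[OF d eventually_conj[OF nz eventually_conj[OF b eventually_gt_at_top[of 0]]]]
    unfolding eventually_at_top_linorder by blast
  have wd: "(w has_real_derivative (u' x / u x - b * (1 / x))) (at x) \<and> u' x / u x - b * (1 / x) \<ge> 0" if "x \<ge> N" for x
  proof
    from N[OF that] have *: "(u has_real_derivative u' x) (at x)" "u x \<noteq> 0" "b \<le> x * u' x / u x" "x > 0" by auto
    have "((\<lambda>y. b * ln y) has_real_derivative b * (1/x)) (at x)" using *(4) by (intro DERIV_cmult DERIV_ln_divide)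
    then show "(w has_real_derivative (u' x / u x - b * (1/x))) (at x)"
      unfolding w_def by (intro DERIV_diff deriv_lnsq[OF *(1,2)])
    have "b / x \<le> (x * u' x / u x) / x" by (rule divide_right_mono[OF *(3)]) (use *(4) in simp)
    also have "\<dots> = u' x / u x" using *(4) by simp
    finally show "u' x / u x - b * (1 / x) \<ge> 0" by simp
  qed
  have ev: "eventually (\<lambda>x. - w N / (b - b') \<le> ln x) at_top" by (rule ln_ev_ge)
  show ?thesis using ev eventually_ge_at_top[of N]
  proof eventually_elim
    case (elim x)
    from N[OF elim(2)] have x0: "x > 0" and ux: "u x \<noteq> 0" by auto
    have "w N \<le> w x" by (rule mono_from_deriv[OF wd order_refl elim(2)])
    moreover have "ln \<bar>u x\<bar> = w x + b * ln x" by (simp add: w_def lnsq_eq)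
    moreover have "(b - b') * (- w N / (b - b')) \<le> (b - b') * ln x"
      using elim(1) bb by (intro mult_left_mono) auto
    then have "- w N \<le> (b - b') * ln x" using bb by simp
    ultimately have "ln (x powr b') \<le> ln \<bar>u x\<bar>" using x0 by (simp add: algebra_simps)
    then show ?case using x0 ux by (subst (asm) ln_le_cancel_iff) auto
  qed
qed

lemma grow_ub:
  fixes u u' :: "real \<Rightarrow> real"
  assumes d: "eventually (\<lambda>x. (u has_real_derivative u' x) (at x)) at_top"
    and nz: "eventually (\<lambda>x. u x \<noteq> 0) at_top"
    and b: "eventually (\<lambda>x. x * u' x / u x \<le> b) at_top" and bb: "b < b'"
  shows "eventually (\<lambda>x. \<bar>u x\<bar> \<le> x powr b') at_top"
proof -
  define w where "w = (\<lambda>x. ln (u x ^ 2) / 2 - b * ln x)"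
  obtain N where N: "\<And>x. x \<ge> N \<Longrightarrow> (u has_real_derivative u' x) (at x) \<and> u x \<noteq> 0 \<and> x * u' x / u x \<le> b \<and> x > 0"
    using eventually_conj[OF d eventually_conj[OF nz eventually_conj[OF b eventually_gt_at_top[of 0]]]]
    unfolding eventually_at_top_linorder by blast
  have wd: "(w has_real_derivative (u' x / u x - b * (1 / x))) (at x) \<and> u' x / u x - b * (1 / x) \<le> 0" if "x \<ge> N" for x
  proof
    from N[OF that] have *: "(u has_real_derivative u' x) (at x)" "u x \<noteq> 0" "x * u' x / u x \<le> b" "x > 0" by auto
    have "((\<lambda>y. b * ln y) has_real_derivative b * (1/x)) (at x)" using *(4) by (intro DERIV_cmult DERIV_ln_divide)
    then show "(w has_real_derivative (u' x / u x - b * (1/x))) (at x)"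
      unfolding w_def by (intro DERIV_diff deriv_lnsq[OF *(1,2)])
    have "(x * u' x / u x) / x \<le> b / x" by (rule divide_right_mono[OF *(3)]) (use *(4) in simp)
    moreover have "(x * u' x / u x) / x = u' x / u x" using *(4) by simp
    ultimately show "u' x / u x - b * (1 / x) \<le> 0" by simp
  qed
  have ev: "eventually (\<lambda>x. w N / (b' - b) \<le> ln x) at_top" by (rule ln_ev_ge)
  show ?thesis using ev eventually_ge_at_top[of N]
  proof eventually_elim
    case (elim x)
    from N[OF elim(2)] have x0: "x > 0" and ux: "u x \<noteq> 0" by auto
    have "w x \<le> w N" by (rule anti_from_deriv[OF wd order_refl elim(2)])
    moreover have "ln \<bar>u x\<bar> = w x + b * ln x" by (simp add: w_def lnsq_eq)
    moreover have "(b' - b) * (w N / (b' - b)) \<le> (b' - b) * ln x"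
      using elim(1) bb by (intro mult_left_mono) auto
    then have "w N \<le> (b' - b) * ln x" using bb by simp
    ultimately have "ln \<bar>u x\<bar> \<le> ln (x powr b')" using x0 by (simp add: algebra_simps)
    then show ?case using x0 ux by (subst (asm) ln_le_cancel_iff) auto
  qed
qed

lemma powr_deriv_aux:
  assumes "x > 0" "\<delta> > 0"
  shows "((\<lambda>x. x powr (-\<delta>) / \<delta>) has_real_derivative - (x powr (-1-\<delta>))) (at x)"
proof -
  have "((\<lambda>x. x powr (-\<delta>) / \<delta>) has_real_derivative (-\<delta> * x powr (-\<delta> - 1)) / \<delta>) (at x)"
    by (intro DERIV_cdivide has_real_derivative_powr assms)
  moreover have "x powr (-\<delta> - 1) = x powr (-1-\<delta>)" by (rule arg_cong[where f="\<lambda>e. x powr e"]) simp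
  then have "(-\<delta> * x powr (-\<delta> - 1)) / \<delta> = - (x powr (-1-\<delta>))" using assms(2) by simp
  ultimately show ?thesis by simp
qed

lemma int_core:
  fixes u u' :: "real \<Rightarrow> real"
  assumes d: "eventually (\<lambda>x. (u has_real_derivative u' x) (at x)) at_top"
    and b: "eventually (\<lambda>x. \<bar>u' x\<bar> \<le> x powr (-1-\<delta>)) at_top" and \<delta>: "\<delta> > 0"
  obtains N where "N > 0" "\<And>x y. N \<le> x \<Longrightarrow> x \<le> y \<Longrightarrow> u y + y powr (-\<delta>) / \<delta> \<le> u x + x powr (-\<delta>) / \<delta>"
     "\<And>x y. N \<le> x \<Longrightarrow> x \<le> y \<Longrightarrow> u x - x powr (-\<delta>) / \<delta> \<le> u y - y powr (-\<delta>) / \<delta>"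
proof -
  obtain N where N: "\<And>x. x \<ge> N \<Longrightarrow> (u has_real_derivative u' x) (at x) \<and> \<bar>u' x\<bar> \<le> x powr (-1-\<delta>) \<and> x > 0"
    using eventually_conj[OF d eventually_conj[OF b eventually_gt_at_top[of 0]]]
    unfolding eventually_at_top_linorder by blast
  have w1: "((\<lambda>x. u x + x powr (-\<delta>) / \<delta>) has_real_derivative (u' x + - (x powr (-1-\<delta>)))) (at x)
       \<and> u' x + - (x powr (-1-\<delta>)) \<le> 0" if "x \<ge> N" for x
  proof
    from N[OF that] have a: "(u has_real_derivative u' x) (at x)" "\<bar>u' x\<bar> \<le> x powr (-1-\<delta>)" "x > 0" by auto
    show "((\<lambda>x. u x + x powr (-\<delta>) / \<delta>) has_real_derivative (u' x + - (x powr (-1-\<delta>)))) (at x)"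
      by (rule DERIV_add[OF a(1) powr_deriv_aux[OF a(3) \<delta>]])
    show "u' x + - (x powr (-1-\<delta>)) \<le> 0" using a(2) by linarith
  qed
  have w2: "((\<lambda>x. u x - x powr (-\<delta>) / \<delta>) has_real_derivative (u' x - - (x powr (-1-\<delta>)))) (at x)
       \<and> u' x - - (x powr (-1-\<delta>)) \<ge> 0" if "x \<ge> N" for x
  proof
    from N[OF that] have a: "(u has_real_derivative u' x) (at x)" "\<bar>u' x\<bar> \<le> x powr (-1-\<delta>)" "x > 0" by auto
    show "((\<lambda>x. u x - x powr (-\<delta>) / \<delta>) has_real_derivative (u' x - - (x powr (-1-\<delta>)))) (at x)"
      by (rule DERIV_diff[OF a(1) powr_deriv_aux[OF a(3) \<delta>]])
    show "u' x - - (x powr (-1-\<delta>)) \<ge> 0" using a(2) by linarith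
  qed
  show ?thesis
  proof (rule that[of N])
    show "N > 0" using N[of N] by auto
    show "u y + y powr (-\<delta>) / \<delta> \<le> u x + x powr (-\<delta>) / \<delta>" if "N \<le> x" "x \<le> y" for x y
      using anti_from_deriv[OF w1 that] .
    show "u x - x powr (-\<delta>) / \<delta> \<le> u y - y powr (-\<delta>) / \<delta>" if "N \<le> x" "x \<le> y" for x y
      using mono_from_deriv[OF w2 that] .
  qed
qed

lemma int_bounded:
  fixes u u' :: "real \<Rightarrow> real"
  assumes d: "eventually (\<lambda>x. (u has_real_derivative u' x) (at x)) at_top"
    and b: "eventually (\<lambda>x. \<bar>u' x\<bar> \<le> x powr (-1-\<delta>)) at_top" and \<delta>: "\<delta> > 0"
  shows "\<exists>B. eventually (\<lambda>x. \<bar>u x\<bar> \<le> B) at_top"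
proof -
  obtain N where N: "N > 0" "\<And>x y. N \<le> x \<Longrightarrow> x \<le> y \<Longrightarrow> u y + y powr (-\<delta>) / \<delta> \<le> u x + x powr (-\<delta>) / \<delta>"
     "\<And>x y. N \<le> x \<Longrightarrow> x \<le> y \<Longrightarrow> u x - x powr (-\<delta>) / \<delta> \<le> u y - y powr (-\<delta>) / \<delta>"
    using int_core[OF d b \<delta>] by blast
  define B where "B = \<bar>u N + N powr (-\<delta>) / \<delta>\<bar> + \<bar>u N - N powr (-\<delta>) / \<delta>\<bar>"
  have "eventually (\<lambda>x. \<bar>u x\<bar> \<le> B) at_top" using eventually_ge_at_top[of N]
  proof eventually_elim
    case (elim x)
    have p: "x powr (-\<delta>) / \<delta> \<ge> 0" using \<delta> by simp
    from N(2)[OF order_refl elim] N(3)[OF order_refl elim] p show ?case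
      unfolding B_def by linarith
  qed
  then show ?thesis by blast
qed

lemma int_zero:
  fixes u u' :: "real \<Rightarrow> real"
  assumes d: "eventually (\<lambda>x. (u has_real_derivative u' x) (at x)) at_top"
    and b: "eventually (\<lambda>x. \<bar>u' x\<bar> \<le> x powr (-1-\<delta>)) at_top" and \<delta>: "\<delta> > 0"
    and lim: "(u \<longlongrightarrow> 0) at_top"
  shows "eventually (\<lambda>x. \<bar>u x\<bar> \<le> x powr (-\<delta>) / \<delta>) at_top"
proof -
  obtain N where N: "N > 0" "\<And>x y. N \<le> x \<Longrightarrow> x \<le> y \<Longrightarrow> u y + y powr (-\<delta>) / \<delta> \<le> u x + x powr (-\<delta>) / \<delta>"
     "\<And>x y. N \<le> x \<Longrightarrow> x \<le> y \<Longrightarrow> u x - x powr (-\<delta>) / \<delta> \<le> u y - y powr (-\<delta>) / \<delta>"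
    using int_core[OF d b \<delta>] by blast
  have p0: "((\<lambda>x. x powr (-\<delta>) / \<delta>) \<longlongrightarrow> 0) at_top"
    using tendsto_divide[OF tendsto_neg_powr[OF _ filterlim_ident, of "-\<delta>"] tendsto_const[of \<delta>]] \<delta> by simp
  have l1: "((\<lambda>x. u x + x powr (-\<delta>) / \<delta>) \<longlongrightarrow> 0) at_top" using tendsto_add[OF lim p0] by simp
  have l2: "((\<lambda>x. u x - x powr (-\<delta>) / \<delta>) \<longlongrightarrow> 0) at_top" using tendsto_diff[OF lim p0] by simp
  show ?thesis using eventually_ge_at_top[of N]
  proof eventually_elim
    case (elim x)
    have "0 \<le> u x + x powr (-\<delta>) / \<delta>"
      by (rule tendsto_le[OF trivial_limit_at_top_linorder tendsto_const l1
            eventually_mono[OF eventually_ge_at_top[of x] N(2)[OF elim]]])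
    moreover have "u x - x powr (-\<delta>) / \<delta> \<le> 0"
      by (rule tendsto_le[OF trivial_limit_at_top_linorder l2 tendsto_const
            eventually_mono[OF eventually_ge_at_top[of x] N(3)[OF elim]]])
    ultimately show ?case by linarith
  qed
qed

lemma int_log:
  fixes u u' :: "real \<Rightarrow> real"
  assumes d: "eventually (\<lambda>x. (u has_real_derivative u' x) (at x)) at_top"
    and b: "eventually (\<lambda>x. \<bar>x * u' x\<bar> \<le> M) at_top"
  shows "\<exists>C. eventually (\<lambda>x. \<bar>u x\<bar> \<le> M * ln x + C) at_top"
proof -
  obtain N where N: "\<And>x. x \<ge> N \<Longrightarrow> (u has_real_derivative u' x) (at x) \<and> \<bar>x * u' x\<bar> \<le> M \<and> x > 0"
    using eventually_conj[OF d eventually_conj[OF b eventually_gt_at_top[of 0]]]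
    unfolding eventually_at_top_linorder by blast
  have bd: "\<bar>u' x\<bar> \<le> M * (1/x)" if "x \<ge> N" for x
  proof -
    from N[OF that] have "\<bar>x\<bar> * \<bar>u' x\<bar> \<le> M" "x > 0" by (auto simp: abs_mult)
    then show ?thesis by (simp add: field_simps)
  qed
  have w1: "((\<lambda>x. u x - M * ln x) has_real_derivative (u' x - M * (1/x))) (at x)
       \<and> u' x - M * (1/x) \<le> 0" if "x \<ge> N" for x
  proof
    from N[OF that] have a: "(u has_real_derivative u' x) (at x)" "x > 0" by auto
    have "((\<lambda>x. M * ln x) has_real_derivative M * (1/x)) (at x)" by (intro DERIV_cmult DERIV_ln_divide a(2))
    then show "((\<lambda>x. u x - M * ln x) has_real_derivative (u' x - M * (1/x))) (at x)"
      by (rule DERIV_diff[OF a(1)])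
    show "u' x - M * (1/x) \<le> 0" using bd[OF that] by linarith
  qed
  have w2: "((\<lambda>x. u x + M * ln x) has_real_derivative (u' x + M * (1/x))) (at x)
       \<and> u' x + M * (1/x) \<ge> 0" if "x \<ge> N" for x
  proof
    from N[OF that] have a: "(u has_real_derivative u' x) (at x)" "x > 0" by auto
    have "((\<lambda>x. M * ln x) has_real_derivative M * (1/x)) (at x)" by (intro DERIV_cmult DERIV_ln_divide a(2))
    then show "((\<lambda>x. u x + M * ln x) has_real_derivative (u' x + M * (1/x))) (at x)"
      by (rule DERIV_add[OF a(1)])
    show "u' x + M * (1/x) \<ge> 0" using bd[OF that] by linarith
  qed
  define C where "C = \<bar>u N - M * ln N\<bar> + \<bar>u N + M * ln N\<bar>"
  have "eventually (\<lambda>x. \<bar>u x\<bar> \<le> M * ln x + C) at_top" using eventually_ge_at_top[of N]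
  proof eventually_elim
    case (elim x)
    from anti_from_deriv[OF w1 order_refl elim] mono_from_deriv[OF w2 order_refl elim]
    show ?case unfolding C_def by linarith
  qed
  then show ?thesis by blast
qed

lemma pin_of_tendsto:
  fixes u u' :: "real \<Rightarrow> real"
  assumes d: "eventually (\<lambda>x. (u has_real_derivative u' x) (at x)) at_top"
    and nz: "eventually (\<lambda>x. u x \<noteq> 0) at_top"
    and lim: "((\<lambda>x. x * u' x / u x) \<longlongrightarrow> c) at_top"
  shows "((\<lambda>x. ln \<bar>u x\<bar> / ln x) \<longlongrightarrow> c) at_top"
proof -
  have "((\<lambda>x. (ln (u x ^ 2) / 2) / ln x) \<longlongrightarrow> c) at_top"
  proof (rule lhospital_at_top_at_top[where f' = "\<lambda>x. u' x / u x" and g' = "\<lambda>x. 1 / x"])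
    show "LIM x at_top. ln (x::real) :> at_top" by (rule ln_at_top)
    show "eventually (\<lambda>x. 1 / x \<noteq> (0::real)) at_top" using eventually_gt_at_top[of 0]
      by eventually_elim simp
    show "eventually (\<lambda>x. ((\<lambda>x. ln (u x ^ 2) / 2) has_real_derivative u' x / u x) (at x)) at_top"
      using d nz
    proof eventually_elim
      case (elim x)
      show ?case by (rule deriv_lnsq[OF elim(1) elim(2)])
    qed
    show "eventually (\<lambda>x. (ln has_real_derivative 1 / x) (at x)) at_top" using eventually_gt_at_top[of 0]
      by eventually_elim (rule DERIV_ln_divide)
    have e: "eventually (\<lambda>x. x * u' x / u x = (u' x / u x) / (1 / x)) at_top" using eventually_gt_at_top[of 0]
      by eventually_elim simp
    show "((\<lambda>x. (u' x / u x) / (1 / x)) \<longlongrightarrow> c) at_top" by (rule iffD1[OF tendsto_cong[OF e] lim])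
  qed
  then show ?thesis by (simp add: lnsq_eq)
qed

lemma L_ub:
  fixes u :: "real \<Rightarrow> real"
  assumes "eventually (\<lambda>x. ln \<bar>u x\<bar> / ln x \<le> b) at_top"
  shows "eventually (\<lambda>x. \<bar>u x\<bar> \<le> x powr b) at_top"
  using assms eventually_gt_at_top[of 1]
proof eventually_elim
  case (elim x)
  show ?case
  proof (cases "u x = 0")
    case False
    have "ln x > 0" using elim by simp
    then have "ln \<bar>u x\<bar> \<le> b * ln x" using elim(1) by (simp add: divide_le_eq)
    then have "ln \<bar>u x\<bar> \<le> ln (x powr b)" using elim by simp
    then show ?thesis using False elim by (subst (asm) ln_le_cancel_iff) auto
  qed simp
qed

lemma L_lb:
  fixes u :: "real \<Rightarrow> real"
  assumes "eventually (\<lambda>x. b \<le> ln \<bar>u x\<bar> / ln x) at_top" "eventually (\<lambda>x. u x \<noteq> 0) at_top"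
  shows "eventually (\<lambda>x. x powr b \<le> \<bar>u x\<bar>) at_top"
  using assms eventually_gt_at_top[of 1]
proof eventually_elim
  case (elim x)
  have "ln x > 0" using elim by simp
  then have "b * ln x \<le> ln \<bar>u x\<bar>" using elim(1) by (simp add: le_divide_eq)
  then have "ln (x powr b) \<le> ln \<bar>u x\<bar>" using elim by simp
  then show ?case using elim by (subst (asm) ln_le_cancel_iff) auto
qed

lemma ub_L:
  fixes u :: "real \<Rightarrow> real"
  assumes "eventually (\<lambda>x. \<bar>u x\<bar> \<le> x powr b) at_top" "eventually (\<lambda>x. u x \<noteq> 0) at_top"
  shows "eventually (\<lambda>x. ln \<bar>u x\<bar> / ln x \<le> b) at_top"
  using assms eventually_gt_at_top[of 1]
proof eventually_elim
  case (elim x)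
  have "ln x > 0" using elim by simp
  have "ln \<bar>u x\<bar> \<le> ln (x powr b)" using elim by (subst ln_le_cancel_iff) auto
  then have "ln \<bar>u x\<bar> \<le> b * ln x" using elim by simp
  then show ?case using \<open>ln x > 0\<close> by (simp add: divide_le_eq)
qed

lemma lb_L:
  fixes u :: "real \<Rightarrow> real"
  assumes "eventually (\<lambda>x. x powr b \<le> \<bar>u x\<bar>) at_top"
  shows "eventually (\<lambda>x. b \<le> ln \<bar>u x\<bar> / ln x) at_top"
  using assms eventually_gt_at_top[of 1]
proof eventually_elim
  case (elim x)
  have "ln x > 0" using elim by simp
  have "x powr b > 0" using elim by simp
  then have "ln (x powr b) \<le> ln \<bar>u x\<bar>" using elim by (subst ln_le_cancel_iff) auto
  then have "b * ln x \<le> ln \<bar>u x\<bar>" using elim by simp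
  then show ?case using \<open>ln x > 0\<close> by (simp add: le_divide_eq)
qed

lemma ev_False_at_top: "eventually (\<lambda>x::real. False) at_top \<Longrightarrow> False"
  by simp

lemma pin_tendsto:
  fixes u u' :: "real \<Rightarrow> real"
  assumes d: "eventually (\<lambda>x. (u has_real_derivative u' x) (at x)) at_top"
    and nz: "eventually (\<lambda>x. u x \<noteq> 0) at_top"
    and Lc: "((\<lambda>x. ln \<bar>u x\<bar> / ln x) \<longlongrightarrow> c) at_top"
    and sc: "\<And>c'. eventually (\<lambda>x. c' \<le> x * u' x / u x) at_top \<or> eventually (\<lambda>x. x * u' x / u x < c') at_top"
  shows "((\<lambda>x. x * u' x / u x) \<longlongrightarrow> c) at_top"
proof (rule order_tendstoI)
  fix y assume y: "y < c"
  define c' where "c' = (y + c) / 2"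
  from sc[of c'] show "eventually (\<lambda>x. y < x * u' x / u x) at_top"
  proof
    assume A: "eventually (\<lambda>x. c' \<le> x * u' x / u x) at_top"
    have "y < c'" using y by (simp add: c'_def)
    show ?thesis using A by eventually_elim (use \<open>y < c'\<close> in linarith)
  next
    assume "eventually (\<lambda>x. x * u' x / u x < c') at_top"
    then have "eventually (\<lambda>x. x * u' x / u x \<le> c') at_top" by eventually_elim simp
    from grow_ub[OF d nz this, of "(c' + c) / 2"] y
    have "eventually (\<lambda>x. \<bar>u x\<bar> \<le> x powr ((c' + c) / 2)) at_top" by (simp add: c'_def)
    from ub_L[OF this nz] have "eventually (\<lambda>x. ln \<bar>u x\<bar> / ln x \<le> (c' + c) / 2) at_top" .
    moreover have "eventually (\<lambda>x. (c' + c) / 2 < ln \<bar>u x\<bar> / ln x) at_top"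
      by (rule order_tendstoD(1)[OF Lc]) (use y in \<open>simp add: c'_def\<close>)
    ultimately have "eventually (\<lambda>x::real. False) at_top" by eventually_elim simp
    then show ?thesis by simp
  qed
next
  fix y assume y: "c < y"
  define c' where "c' = (y + c) / 2"
  from sc[of c'] show "eventually (\<lambda>x. x * u' x / u x < y) at_top"
  proof
    assume A: "eventually (\<lambda>x. x * u' x / u x < c') at_top"
    have "c' < y" using y by (simp add: c'_def)
    show ?thesis using A by eventually_elim (use \<open>c' < y\<close> in linarith)
  next
    assume "eventually (\<lambda>x. c' \<le> x * u' x / u x) at_top"
    from grow_lb[OF d nz this, of "(c' + c) / 2"] y
    have "eventually (\<lambda>x. x powr ((c' + c) / 2) \<le> \<bar>u x\<bar>) at_top" by (simp add: c'_def)
    from lb_L[OF this] have "eventually (\<lambda>x. (c' + c) / 2 \<le> ln \<bar>u x\<bar> / ln x) at_top" .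
    moreover have "eventually (\<lambda>x. ln \<bar>u x\<bar> / ln x < (c' + c) / 2) at_top"
      by (rule order_tendstoD(2)[OF Lc]) (use y in \<open>simp add: c'_def\<close>)
    ultimately have "eventually (\<lambda>x::real. False) at_top" by eventually_elim simp
    then show ?thesis by simp
  qed
qed

lemma ln_split:
  fixes x ux vx r :: real
  assumes "x > 0" "ux \<noteq> 0" "vx \<noteq> 0" "r = x * vx / ux"
  shows "ln \<bar>vx\<bar> = ln \<bar>r\<bar> + ln \<bar>ux\<bar> - ln x"
proof -
  have "r * ux = vx * x" using assms by (simp add: field_simps)
  then have "\<bar>r * ux\<bar> = \<bar>vx * x\<bar>" by simp
  then have "\<bar>r\<bar> * \<bar>ux\<bar> = \<bar>vx\<bar> * x" using assms(1) by (simp only: abs_mult abs_of_pos)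
  then have e: "\<bar>vx\<bar> = \<bar>r\<bar> * (\<bar>ux\<bar> / x)" using assms(1) by (simp add: field_simps)
  have r0: "\<bar>r\<bar> > 0" using assms by simp
  have q0: "\<bar>ux\<bar> / x > 0" using assms by simp
  have "ln \<bar>vx\<bar> = ln \<bar>r\<bar> + ln (\<bar>ux\<bar> / x)" unfolding e by (rule ln_mult_pos[OF r0 q0])
  also have "ln (\<bar>ux\<bar> / x) = ln \<bar>ux\<bar> - ln x" using assms by (intro ln_divide_pos) auto
  finally show ?thesis by simp
qed

lemma pin_deriv:
  fixes u u' :: "real \<Rightarrow> real"
  assumes nz: "eventually (\<lambda>x. u x \<noteq> 0) at_top"
    and R: "((\<lambda>x. x * u' x / u x) \<longlongrightarrow> a) at_top" and a: "a \<noteq> 0"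
    and Lc: "((\<lambda>x. ln \<bar>u x\<bar> / ln x) \<longlongrightarrow> c) at_top"
  shows "eventually (\<lambda>x. u' x \<noteq> 0) at_top" "((\<lambda>x. ln \<bar>u' x\<bar> / ln x) \<longlongrightarrow> c - 1) at_top"
proof -
  have Rnz: "eventually (\<lambda>x. x * u' x / u x \<noteq> 0) at_top"
    using tendsto_imp_eventually_ne[OF R a] .
  then show nz': "eventually (\<lambda>x. u' x \<noteq> 0) at_top" by eventually_elim auto
  have e: "eventually (\<lambda>x. ln \<bar>u' x\<bar> / ln x = ln \<bar>x * u' x / u x\<bar> / ln x + ln \<bar>u x\<bar> / ln x - 1) at_top"
    using nz nz' eventually_gt_at_top[of 1]
  proof eventually_elim
    case (elim x)
    have "ln \<bar>u' x\<bar> = ln \<bar>x * u' x / u x\<bar> + ln \<bar>u x\<bar> - ln x"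
      by (rule ln_split) (use elim in auto)
    moreover have "ln x > 0" using elim by simp
    ultimately show ?case by (simp add: field_simps)
  qed
  have "((\<lambda>x. ln \<bar>x * u' x / u x\<bar> / ln x) \<longlongrightarrow> 0) at_top"
    by (rule tendsto_divide_0[OF tendsto_ln[OF tendsto_rabs[OF R]]])
       (use a filterlim_at_top_imp_at_infinity[OF ln_at_top] in auto)
  then have T: "((\<lambda>x. ln \<bar>x * u' x / u x\<bar> / ln x + ln \<bar>u x\<bar> / ln x - 1) \<longlongrightarrow> 0 + c - 1) at_top"
    by (intro tendsto_intros Lc)
  have "((\<lambda>x. ln \<bar>u' x\<bar> / ln x) \<longlongrightarrow> 0 + c - 1) at_top" by (rule iffD2[OF tendsto_cong[OF e] T])
  then show "((\<lambda>x. ln \<bar>u' x\<bar> / ln x) \<longlongrightarrow> c - 1) at_top" by simp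
qed

lemma final_G1:
  fixes u :: "real \<Rightarrow> real" and k e :: real
  assumes nz: "eventually (\<lambda>x. u x \<noteq> 0) at_top"
    and L: "((\<lambda>x. ln \<bar>u x\<bar> / ln x) \<longlongrightarrow> e) at_top" and e: "e < 0" and k: "k > 0"
  shows "(\<lambda>_. 1::real) \<in> o[at_top](\<lambda>x. \<bar>u x\<bar> powr (-1 / k))"
proof (rule landau_o.smallI)
  fix C :: real assume C: "C > 0"
  define p where "p = -e / (2*k)"
  have p: "p > 0" unfolding p_def using e k by (intro divide_pos_pos) auto
  have ev1: "eventually (\<lambda>x. ln \<bar>u x\<bar> / ln x < e / 2) at_top"
    by (rule order_tendstoD(2)[OF L]) (use e in simp)
  have ev2: "eventually (\<lambda>x. - ln C / p \<le> ln x) at_top" by (rule ln_ev_ge)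
  show "eventually (\<lambda>x. norm (1::real) \<le> C * norm (\<bar>u x\<bar> powr (-1 / k))) at_top"
    using ev1 ev2 nz eventually_gt_at_top[of 1]
  proof eventually_elim
    case (elim x)
    have lx: "ln x > 0" using elim by simp
    have "ln \<bar>u x\<bar> / ln x * ln x < (e/2) * ln x" using elim(1) lx by (intro mult_strict_right_mono)
    moreover have "ln \<bar>u x\<bar> / ln x * ln x = ln \<bar>u x\<bar>" using lx by simp
    ultimately have a: "ln \<bar>u x\<bar> \<le> (e/2) * ln x" by simp
    have "(-1/k) * ((e/2) * ln x) \<le> (-1/k) * ln \<bar>u x\<bar>"
      by (rule mult_left_mono_neg[OF a]) (use k in simp)
    moreover have "(-1/k) * ((e/2) * ln x) = p * ln x" using k by (simp add: p_def field_simps)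
    moreover have "p * (- ln C / p) \<le> p * ln x" by (rule mult_left_mono[OF elim(2)]) (use p in simp)
    moreover have "p * (- ln C / p) = - ln C" using p by simp
    ultimately have le: "- ln C \<le> (-1/k) * ln \<bar>u x\<bar>" by linarith
    have "\<bar>u x\<bar> powr (-1/k) = exp ((-1/k) * ln \<bar>u x\<bar>)" using elim(3) by (simp add: powr_def)
    moreover have "exp (- ln C) \<le> exp ((-1/k) * ln \<bar>u x\<bar>)" using le by simp
    moreover have "C * exp (- ln C) = 1" using C by (simp add: exp_minus field_simps)
    ultimately have "1 \<le> C * \<bar>u x\<bar> powr (-1/k)" using C by (metis mult_left_mono less_imp_le)
    then show ?case by simp
  qed
qed

lemma final_G3:
  fixes v :: "real \<Rightarrow> real" and m :: real
  assumes nz: "eventually (\<lambda>x. v x \<noteq> 0) at_top"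
    and B: "\<forall>M. eventually (\<lambda>x. M \<le> ln \<bar>v x\<bar> + m * ln x) at_top" and m: "m > 0"
  shows "(\<lambda>x. \<bar>v x\<bar> powr (-1 / m)) \<in> o[at_top](\<lambda>x. x)"
proof (rule landau_o.smallI)
  fix C :: real assume C: "C > 0"
  show "eventually (\<lambda>x. norm (\<bar>v x\<bar> powr (-1 / m)) \<le> C * norm x) at_top"
    using B[rule_format, of "- m * ln C"] nz eventually_gt_at_top[of 1]
  proof eventually_elim
    case (elim x)
    have "- m * ln C / m \<le> (ln \<bar>v x\<bar> + m * ln x) / m" by (rule divide_right_mono[OF elim(1)]) (use m in simp)
    then have "- ln C \<le> (ln \<bar>v x\<bar> + m * ln x) / m" using m by simp
    moreover have "(-1/m) * ln \<bar>v x\<bar> = - ((ln \<bar>v x\<bar> + m * ln x) / m) + ln x" using m by (simp add: field_simps)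
    ultimately have le: "(-1/m) * ln \<bar>v x\<bar> \<le> ln C + ln x" by linarith
    have "\<bar>v x\<bar> powr (-1/m) = exp ((-1/m) * ln \<bar>v x\<bar>)" using elim(2) by (simp add: powr_def)
    also have "\<dots> \<le> exp (ln C + ln x)" using le by simp
    also have "\<dots> = C * x" using C elim(3) by (simp add: exp_add)
    finally show ?case using elim(3) by simp
  qed
qed

lemma final_G2:
  fixes u v :: "real \<Rightarrow> real" and k A :: real
  assumes nzu: "eventually (\<lambda>x. u x \<noteq> 0) at_top" and nzv: "eventually (\<lambda>x. v x \<noteq> 0) at_top"
    and ratio: "eventually (\<lambda>x. x * \<bar>v x\<bar> \<le> A * \<bar>u x\<bar>) at_top" and A: "A > 0"
    and B: "\<forall>M. eventually (\<lambda>x. M \<le> ln \<bar>u x\<bar> + k * ln x) at_top" and k: "k > 0"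
  shows "(\<lambda>x. \<bar>u x\<bar> powr (-1 / k)) \<in> o[at_top](\<lambda>x. \<bar>v x\<bar> powr (-1 / (k + 1)))"
proof (rule landau_o.smallI)
  fix C :: real assume C: "C > 0"
  define \<alpha> where "\<alpha> = 1 / k"
  define \<beta> where "\<beta> = 1 / (k + 1)"
  have ab: "\<alpha> * \<beta> > 0" using k by (simp add: \<alpha>_def \<beta>_def)
  define M where "M = (\<beta> * ln A - ln C) / (\<alpha> * \<beta>)"
  show "eventually (\<lambda>x. norm (\<bar>u x\<bar> powr (-1 / k)) \<le> C * norm (\<bar>v x\<bar> powr (-1 / (k + 1)))) at_top"
    using B[rule_format, of M] nzu nzv ratio eventually_gt_at_top[of 1]
  proof eventually_elim
    case (elim x)
    define lu where "lu = ln \<bar>u x\<bar>"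
    define lv where "lv = ln \<bar>v x\<bar>"
    define T where "T = lu + k * ln x"
    have x0: "x > 0" using elim by simp
    have p1: "x * \<bar>v x\<bar> > 0" using x0 elim(3) by simp
    have p2: "A * \<bar>u x\<bar> > 0" using A elim(2) by simp
    have "ln (x * \<bar>v x\<bar>) \<le> ln (A * \<bar>u x\<bar>)"
      using elim(4) p1 p2 by simp
    moreover have "ln (x * \<bar>v x\<bar>) = ln x + lv" unfolding lv_def by (rule ln_mult_pos) (use x0 elim(3) in auto)
    moreover have "ln (A * \<bar>u x\<bar>) = ln A + lu" unfolding lu_def by (rule ln_mult_pos) (use A elim(2) in auto)
    ultimately have r: "ln x + lv \<le> ln A + lu" by simp
    have nb: "-1/(k+1) = -\<beta>" "-1/k = -\<alpha>" by (simp_all add: \<alpha>_def \<beta>_def)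
    have h1: "(-\<beta>) * (ln A + lu - ln x) \<le> (-\<beta>) * lv"
      by (rule mult_left_mono_neg) (use r k in \<open>auto simp: \<beta>_def\<close>)
    have "\<alpha> * \<beta> * M \<le> \<alpha> * \<beta> * T" by (rule mult_left_mono) (use elim(1) ab in \<open>auto simp: T_def lu_def\<close>)
    moreover have "\<alpha> * \<beta> * M = \<beta> * ln A - ln C"
    proof -
      have "\<alpha> \<noteq> 0" "\<beta> \<noteq> 0" using k by (simp_all add: \<alpha>_def \<beta>_def)
      then show ?thesis unfolding M_def by simp
    qed
    ultimately have h2: "\<beta> * ln A - ln C \<le> \<alpha> * \<beta> * T" by simp
    have f1: "\<alpha> * \<beta> * k = \<beta>" using k by (simp add: \<alpha>_def \<beta>_def)
    have f2: "\<alpha> - \<beta> - \<alpha> * \<beta> = 0" using k by (simp add: \<alpha>_def \<beta>_def field_simps)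
    have "ln C + (-\<beta>) * (ln A + lu - ln x) - (\<alpha> * \<beta> * T - (\<beta> * ln A - ln C)) - (-\<alpha> * lu)
        = (\<alpha> - \<beta> - \<alpha> * \<beta>) * lu + (\<beta> - \<alpha> * \<beta> * k) * ln x"
      by (simp add: T_def algebra_simps)
    also have "\<dots> = 0" using f1 f2 by simp
    finally have idt: "-\<alpha> * lu = ln C + (-\<beta>) * (ln A + lu - ln x) - (\<alpha> * \<beta> * T - (\<beta> * ln A - ln C))"
      by simp
    have le0: "-\<alpha> * lu \<le> ln C + (-\<beta>) * lv" using idt h1 h2 by linarith
    have le: "(-1/k) * lu \<le> ln C + (-1/(k+1)) * lv" using le0 unfolding nb .
    have "\<bar>u x\<bar> powr (-1/k) = exp ((-1/k) * lu)" using elim(2) by (simp add: powr_def lu_def)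
    also have "\<dots> \<le> exp (ln C + (-1/(k+1)) * lv)" using le by simp
    also have "\<dots> = exp (ln C) * exp ((-1/(k+1)) * lv)" by (rule exp_add)
    also have "\<dots> = C * \<bar>v x\<bar> powr (-1/(k+1))" using C elim(3) by (simp add: powr_def lv_def)
    finally show ?case by simp
  qed
qed

lemma ratio_bounds:
  fixes u v :: "real \<Rightarrow> real"
  assumes R: "((\<lambda>x. x * v x / u x) \<longlongrightarrow> e) at_top" and e: "e \<noteq> 0"
    and nz: "eventually (\<lambda>x. u x \<noteq> 0) at_top"
  shows "eventually (\<lambda>x. \<bar>e\<bar> / 2 * \<bar>u x\<bar> \<le> x * \<bar>v x\<bar> \<and> x * \<bar>v x\<bar> \<le> 2 * \<bar>e\<bar> * \<bar>u x\<bar>) at_top"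
proof -
  have "eventually (\<lambda>x. dist (x * v x / u x) e < \<bar>e\<bar> / 2) at_top"
    by (rule tendstoD[OF R]) (use e in simp)
  then show ?thesis using nz eventually_gt_at_top[of 0]
  proof eventually_elim
    case (elim x)
    define r where "r = x * v x / u x"
    have "\<bar>r - e\<bar> < \<bar>e\<bar> / 2" using elim(1) by (simp add: dist_real_def r_def)
    then have r1: "\<bar>e\<bar> / 2 \<le> \<bar>r\<bar>" "\<bar>r\<bar> \<le> 2 * \<bar>e\<bar>" by linarith+
    have ux: "\<bar>u x\<bar> > 0" using elim by simp
    have "\<bar>r\<bar> * \<bar>u x\<bar> = x * \<bar>v x\<bar>" using elim by (simp add: r_def abs_mult abs_divide)
    moreover have "\<bar>e\<bar> / 2 * \<bar>u x\<bar> \<le> \<bar>r\<bar> * \<bar>u x\<bar>" by (rule mult_right_mono[OF r1(1)]) simp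
    moreover have "\<bar>r\<bar> * \<bar>u x\<bar> \<le> 2 * \<bar>e\<bar> * \<bar>u x\<bar>" by (rule mult_right_mono[OF r1(2)]) simp
    ultimately show ?case by simp
  qed
qed

lemma B_of_L:
  fixes u :: "real \<Rightarrow> real" and e k :: real
  assumes L: "((\<lambda>x. ln \<bar>u x\<bar> / ln x) \<longlongrightarrow> e) at_top" and ek: "e + k > 0"
  shows "\<forall>M. eventually (\<lambda>x. M \<le> ln \<bar>u x\<bar> + k * ln x) at_top"
proof
  fix M
  have "((\<lambda>x. ln \<bar>u x\<bar> / ln x + k) \<longlongrightarrow> e + k) at_top" by (intro tendsto_intros L)
  from filterlim_tendsto_pos_mult_at_top[OF this ek ln_at_top]
  have "eventually (\<lambda>x. M \<le> (ln \<bar>u x\<bar> / ln x + k) * ln x) at_top"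
    unfolding filterlim_at_top by blast
  then show "eventually (\<lambda>x. M \<le> ln \<bar>u x\<bar> + k * ln x) at_top" using eventually_gt_at_top[of 1]
  proof eventually_elim
    case (elim x)
    have "ln x > 0" using elim by simp
    then have "(ln \<bar>u x\<bar> / ln x + k) * ln x = ln \<bar>u x\<bar> + k * ln x" by (simp add: field_simps)
    with elim show ?case by simp
  qed
qed

definition goodp :: "(real \<Rightarrow> real) \<Rightarrow> nat \<Rightarrow> real \<Rightarrow> bool" where
  "goodp f k a \<longleftrightarrow> eventually (\<lambda>x. (deriv ^^ k) f x \<noteq> 0) at_top \<and>
     ((\<lambda>x. x * (deriv ^^ Suc k) f x / (deriv ^^ k) f x) \<longlongrightarrow> a) at_top"

context
  fixes H :: "(real \<Rightarrow> real) set" and f :: "real \<Rightarrow> real"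
  assumes H: "standing_hardy_field H" and fH: "f \<in> H"
begin

lemma Dg: "germ_in ((deriv ^^ k) f) H"
  using D_germ[OF H germ_in_H[OF fH]] .

lemma Dd: "eventually (\<lambda>x. ((deriv ^^ k) f has_real_derivative (deriv ^^ Suc k) f x) (at x)) at_top"
  using D_deriv[OF H germ_in_H[OF fH]] .

lemma Rg: "germ_in (\<lambda>x. x * (deriv ^^ Suc k) f x / (deriv ^^ k) f x) H"
proof -
  have "germ_in (\<lambda>x. (x * (deriv ^^ Suc k) f x) * inverse ((deriv ^^ k) f x)) H"
    by (rule germ_mult[OF H germ_mult[OF H germ_id[OF H] Dg] germ_inverse[OF H Dg]])
  then show ?thesis by (simp add: divide_inverse)
qed

lemma Rsc: "eventually (\<lambda>x. c \<le> x * (deriv ^^ Suc k) f x / (deriv ^^ k) f x) at_top \<or>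
    eventually (\<lambda>x. x * (deriv ^^ Suc k) f x / (deriv ^^ k) f x < c) at_top"
  by (rule sign_const[OF H Rg])

lemma good_L: "goodp f k a \<Longrightarrow> ((\<lambda>x. ln \<bar>(deriv ^^ k) f x\<bar> / ln x) \<longlongrightarrow> a) at_top"
  unfolding goodp_def using pin_of_tendsto[OF Dd] by blast

lemma good_step:
  assumes g: "goodp f k a" and a: "a \<noteq> 0"
  shows "goodp f (Suc k) (a - 1)"
proof -
  from g have nz: "eventually (\<lambda>x. (deriv ^^ k) f x \<noteq> 0) at_top"
    and R: "((\<lambda>x. x * (deriv ^^ Suc k) f x / (deriv ^^ k) f x) \<longlongrightarrow> a) at_top"
    unfolding goodp_def by blast+
  have L: "((\<lambda>x. ln \<bar>(deriv ^^ k) f x\<bar> / ln x) \<longlongrightarrow> a) at_top" by (rule good_L[OF g])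
  from pin_deriv[OF nz R a L]
  have nz': "eventually (\<lambda>x. (deriv ^^ Suc k) f x \<noteq> 0) at_top"
    and L': "((\<lambda>x. ln \<bar>(deriv ^^ Suc k) f x\<bar> / ln x) \<longlongrightarrow> a - 1) at_top" by blast+
  have "((\<lambda>x. x * (deriv ^^ Suc (Suc k)) f x / (deriv ^^ Suc k) f x) \<longlongrightarrow> a - 1) at_top"
    by (rule pin_tendsto[OF Dd nz' L' Rsc])
  then show ?thesis using nz' unfolding goodp_def by blast
qed

lemma good_iter:
  assumes g: "goodp f k a" and ne: "\<And>j. j < m \<Longrightarrow> a - real j \<noteq> 0"
  shows "goodp f (k + m) (a - real m)"
  using ne
proof (induction m)
  case 0 then show ?case using g by simp
next
  case (Suc m)
  have "goodp f (k + m) (a - real m)" using Suc by simp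
  from good_step[OF this Suc.prems[of m]] show ?case by (simp add: algebra_simps)
qed

end

context
  fixes H :: "(real \<Rightarrow> real) set" and f :: "real \<Rightarrow> real"
  assumes H: "standing_hardy_field H" and fH: "f \<in> H"
begin

lemma R0_limit:
  assumes fl: "eventually (\<lambda>x. x powr real d \<le> \<bar>f x\<bar>) at_top"
    and fu: "eventually (\<lambda>x. \<bar>f x\<bar> \<le> x powr real (d + 1)) at_top"
  shows "\<exists>a. goodp f 0 a \<and> real d \<le> a \<and> a \<le> real d + 1"
proof -
  have nz0: "eventually (\<lambda>x. (deriv ^^ 0) f x \<noteq> 0) at_top" using fl eventually_gt_at_top[of 0]
  proof eventually_elim
    case (elim x)
    have "0 < x powr real d" using elim(2) by simp
    then show ?case using elim(1) by auto
  qed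
  have fl0: "eventually (\<lambda>x. x powr real d \<le> \<bar>(deriv ^^ 0) f x\<bar>) at_top" using fl by simp
  have fu0: "eventually (\<lambda>x. \<bar>(deriv ^^ 0) f x\<bar> \<le> x powr real (d + 1)) at_top" using fu by simp
  define S where "S = {c. eventually (\<lambda>x. c \<le> x * (deriv ^^ Suc 0) f x / (deriv ^^ 0) f x) at_top}"
  have Sub: "c \<le> real d + 1" if "c \<in> S" for c
  proof (rule ccontr)
    assume "\<not> c \<le> real d + 1"
    then have c: "c > real d + 1" by simp
    from that have ev: "eventually (\<lambda>x. c \<le> x * (deriv ^^ Suc 0) f x / (deriv ^^ 0) f x) at_top"
      by (simp add: S_def)
    from grow_lb[OF Dd[OF H fH] nz0 ev, of "(c + (real d + 1)) / 2"] c
    have "eventually (\<lambda>x. x powr ((c + (real d + 1)) / 2) \<le> \<bar>(deriv ^^ 0) f x\<bar>) at_top" by simp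
    with fu0 have "eventually (\<lambda>x. x powr ((c + (real d + 1)) / 2) \<le> 1 * x powr real (d + 1)) at_top"
      by eventually_elim simp
    then show False by (rule powr_contra) (use c in simp)
  qed
  have dS: "real d - 1 \<in> S"
    using Rsc[OF H fH, of "real d - 1" 0]
  proof
    assume "eventually (\<lambda>x. real d - 1 \<le> x * (deriv ^^ Suc 0) f x / (deriv ^^ 0) f x) at_top"
    then show ?thesis by (simp add: S_def)
  next
    assume "eventually (\<lambda>x. x * (deriv ^^ Suc 0) f x / (deriv ^^ 0) f x < real d - 1) at_top"
    then have "eventually (\<lambda>x. x * (deriv ^^ Suc 0) f x / (deriv ^^ 0) f x \<le> real d - 1) at_top"
      by eventually_elim simp
    from grow_ub[OF Dd[OF H fH] nz0 this, of "real d - 1 / 2"]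
    have "eventually (\<lambda>x. \<bar>(deriv ^^ 0) f x\<bar> \<le> x powr (real d - 1 / 2)) at_top" by simp
    with fl0 have "eventually (\<lambda>x. x powr real d \<le> 1 * x powr (real d - 1 / 2)) at_top"
      by eventually_elim simp
    then show ?thesis by (rule powr_contra[THEN FalseE]) simp
  qed
  have bdd: "bdd_above S" by (rule bdd_aboveI[of _ "real d + 1"]) (rule Sub)
  have ne: "S \<noteq> {}" using dS by blast
  obtain a where a_def: "a = Sup S" by blast
  have lim: "((\<lambda>x. x * (deriv ^^ Suc 0) f x / (deriv ^^ 0) f x) \<longlongrightarrow> a) at_top"
  proof (rule order_tendstoI)
    fix y assume "y < a"
    then obtain c where c: "c \<in> S" "y < c" using less_cSup_iff[OF ne bdd] unfolding a_def by blast
    from c(1) have ev: "eventually (\<lambda>x. c \<le> x * (deriv ^^ Suc 0) f x / (deriv ^^ 0) f x) at_top"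
      by (simp add: S_def)
    show "eventually (\<lambda>x. y < x * (deriv ^^ Suc 0) f x / (deriv ^^ 0) f x) at_top"
      using ev by eventually_elim (use c(2) in linarith)
  next
    fix y assume y: "a < y"
    from Rsc[OF H fH, of y 0]
    show "eventually (\<lambda>x. x * (deriv ^^ Suc 0) f x / (deriv ^^ 0) f x < y) at_top"
    proof
      assume "eventually (\<lambda>x. y \<le> x * (deriv ^^ Suc 0) f x / (deriv ^^ 0) f x) at_top"
      then have "y \<in> S" by (simp add: S_def)
      then have "y \<le> a" unfolding a_def by (rule cSup_upper[OF _ bdd])
      with y show ?thesis by simp
    qed simp
  qed
  have g: "goodp f 0 a" unfolding goodp_def using nz0 lim by blast
  have L: "((\<lambda>x. ln \<bar>(deriv ^^ 0) f x\<bar> / ln x) \<longlongrightarrow> a) at_top" by (rule good_L[OF H fH g])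
  have a1: "real d \<le> a" by (rule tendsto_lowerbound[OF L lb_L[OF fl0]]) simp
  have a2: "a \<le> real (d + 1)" by (rule tendsto_upperbound[OF L ub_L[OF fu0 nz0]]) simp
  have "goodp f 0 a \<and> real d \<le> a \<and> a \<le> real d + 1" using g a1 a2 by simp
  then show "\<exists>a. goodp f 0 a \<and> real d \<le> a \<and> a \<le> real d + 1" by blast
qed

lemma caseA:
  assumes g: "goodp f 0 a" and ad: "real d \<le> a" "a \<le> real d + 1" and ni: "\<And>n::nat. a \<noteq> real n"
  shows "\<exists>K\<ge>1. \<forall>k\<ge>K. goodp f k (a - real k) \<and> a - real k < 0 \<and>
            (\<forall>M. eventually (\<lambda>x. M \<le> ln \<bar>(deriv ^^ k) f x\<bar> + real k * ln x) at_top)"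
proof (intro exI[of _ "d + 1"] conjI allI impI)
  show "1 \<le> d + 1" by simp
  fix k :: nat assume k: "d + 1 \<le> k"
  have "goodp f (0 + k) (a - real k)"
    by (rule good_iter[OF H fH g]) (use ni in \<open>metis eq_iff_diff_eq_0\<close>)
  then show gk: "goodp f k (a - real k)" by simp
  have "a \<noteq> real (d + 1)" by (rule ni)
  then have "a < real d + 1" using ad by simp
  then show "a - real k < 0" using k by linarith
  have "a \<noteq> real 0" by (rule ni)
  then have "a > 0" using ad by simp
  have "\<forall>M. eventually (\<lambda>x. M \<le> ln \<bar>(deriv ^^ k) f x\<bar> + real k * ln x) at_top"
    by (rule B_of_L[OF good_L[OF H fH gk]]) (use \<open>a > 0\<close> in simp)
  then show "eventually (\<lambda>x. M \<le> ln \<bar>(deriv ^^ k) f x\<bar> + real k * ln x) at_top" for M by blast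
qed

end

context
  fixes H :: "(real \<Rightarrow> real) set" and f :: "real \<Rightarrow> real"
  assumes H: "standing_hardy_field H" and fH: "f \<in> H"
begin

lemma gn:
  assumes g: "goodp f 0 (real n)" and j: "j \<le> n"
  shows "goodp f j (real n - real j)"
proof -
  have "goodp f (0 + j) (real n - real j)" by (rule good_iter[OF H fH g]) (use j in auto)
  then show ?thesis by simp
qed

lemma chain:
  assumes g: "goodp f 0 (real n)"
  shows "j \<le> n \<Longrightarrow> (\<exists>C>0. eventually (\<lambda>x. \<bar>f x\<bar> \<le> C * x ^ j * \<bar>(deriv ^^ j) f x\<bar>) at_top) \<and>
     (\<exists>c>0. eventually (\<lambda>x. c * x ^ j * \<bar>(deriv ^^ j) f x\<bar> \<le> \<bar>f x\<bar>) at_top)"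
proof (induction j)
  case 0
  have "eventually (\<lambda>x. \<bar>f x\<bar> \<le> 1 * x ^ 0 * \<bar>(deriv ^^ 0) f x\<bar>) at_top" by simp
  moreover have "eventually (\<lambda>x. 1 * x ^ 0 * \<bar>(deriv ^^ 0) f x\<bar> \<le> \<bar>f x\<bar>) at_top" by simp
  ultimately show ?case by (intro conjI exI[of _ "1::real"]) auto
next
  case (Suc j)
  then have j: "j < n" "j \<le> n" by auto
  from Suc.IH[OF j(2)] obtain C c where C: "C > 0" "eventually (\<lambda>x. \<bar>f x\<bar> \<le> C * x ^ j * \<bar>(deriv ^^ j) f x\<bar>) at_top"
    and c: "c > 0" "eventually (\<lambda>x. c * x ^ j * \<bar>(deriv ^^ j) f x\<bar> \<le> \<bar>f x\<bar>) at_top" by blast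
  have gj: "goodp f j (real n - real j)" by (rule gn[OF g j(2)])
  define e where "e = real n - real j"
  have e: "e \<noteq> 0" "\<bar>e\<bar> > 0" using j by (auto simp: e_def)
  from gj have nz: "eventually (\<lambda>x. (deriv ^^ j) f x \<noteq> 0) at_top"
    and R: "((\<lambda>x. x * (deriv ^^ Suc j) f x / (deriv ^^ j) f x) \<longlongrightarrow> e) at_top"
    unfolding goodp_def e_def by blast+
  have rb: "eventually (\<lambda>x. \<bar>e\<bar> / 2 * \<bar>(deriv ^^ j) f x\<bar> \<le> x * \<bar>(deriv ^^ Suc j) f x\<bar> \<and>
       x * \<bar>(deriv ^^ Suc j) f x\<bar> \<le> 2 * \<bar>e\<bar> * \<bar>(deriv ^^ j) f x\<bar>) at_top"
    by (rule ratio_bounds[OF R e(1) nz])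
  have up: "eventually (\<lambda>x. \<bar>f x\<bar> \<le> (2 * C / \<bar>e\<bar>) * x ^ Suc j * \<bar>(deriv ^^ Suc j) f x\<bar>) at_top"
    using C(2) rb eventually_gt_at_top[of 0]
  proof eventually_elim
    case (elim x)
    have "\<bar>(deriv ^^ j) f x\<bar> \<le> (x * \<bar>(deriv ^^ Suc j) f x\<bar>) / (\<bar>e\<bar> / 2)"
      using elim(2) e(2) by (simp add: pos_le_divide_eq mult.commute)
    then have "C * x ^ j * \<bar>(deriv ^^ j) f x\<bar> \<le> C * x ^ j * ((x * \<bar>(deriv ^^ Suc j) f x\<bar>) / (\<bar>e\<bar> / 2))"
      by (rule mult_left_mono) (use C(1) elim(3) in simp)
    also have "\<dots> = (2 * C / \<bar>e\<bar>) * x ^ Suc j * \<bar>(deriv ^^ Suc j) f x\<bar>"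
      using e(2) by (simp add: field_simps)
    finally show ?case using elim(1) by linarith
  qed
  have lo: "eventually (\<lambda>x. (c / (2 * \<bar>e\<bar>)) * x ^ Suc j * \<bar>(deriv ^^ Suc j) f x\<bar> \<le> \<bar>f x\<bar>) at_top"
    using c(2) rb eventually_gt_at_top[of 0]
  proof eventually_elim
    case (elim x)
    have "(x * \<bar>(deriv ^^ Suc j) f x\<bar>) / (2 * \<bar>e\<bar>) \<le> \<bar>(deriv ^^ j) f x\<bar>"
      using elim(2) e(2) by (simp add: pos_divide_le_eq mult.commute)
    then have "c * x ^ j * ((x * \<bar>(deriv ^^ Suc j) f x\<bar>) / (2 * \<bar>e\<bar>)) \<le> c * x ^ j * \<bar>(deriv ^^ j) f x\<bar>"
      by (rule mult_left_mono) (use c(1) elim(3) in simp)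
    moreover have "c * x ^ j * ((x * \<bar>(deriv ^^ Suc j) f x\<bar>) / (2 * \<bar>e\<bar>)) = (c / (2 * \<bar>e\<bar>)) * x ^ Suc j * \<bar>(deriv ^^ Suc j) f x\<bar>"
      using e(2) by (simp add: field_simps)
    ultimately show ?case using elim(1) by linarith
  qed
  have "2 * C / \<bar>e\<bar> > 0" "c / (2 * \<bar>e\<bar>) > 0" using C(1) c(1) e(2) by simp_all
  then show ?case using up lo by blast
qed

lemma unb:
  assumes g: "goodp f 0 (real d)" and lo: "(\<lambda>t. t ^ d) \<in> o[at_top](f)"
  shows "\<not> eventually (\<lambda>x. \<bar>(deriv ^^ d) f x\<bar> \<le> B) at_top"
proof
  assume bd: "eventually (\<lambda>x. \<bar>(deriv ^^ d) f x\<bar> \<le> B) at_top"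
  from chain[OF g, of d] obtain C where C: "C > 0" "eventually (\<lambda>x. \<bar>f x\<bar> \<le> C * x ^ d * \<bar>(deriv ^^ d) f x\<bar>) at_top"
    by auto
  define q where "q = C * (\<bar>B\<bar> + 1)"
  have q: "q > 0" using C(1) by (simp add: q_def)
  have ev: "eventually (\<lambda>x. norm (x ^ d) \<le> (1 / q) * norm (f x)) at_top"
    by (rule landau_o.smallD[OF lo]) (use q in simp)
  have "eventually (\<lambda>x::real. False) at_top" using ev C(2) bd eventually_gt_at_top[of 0]
  proof eventually_elim
    case (elim x)
    have xd: "x ^ d > 0" using elim(4) by simp
    have a: "x ^ d \<le> (1 / q) * \<bar>f x\<bar>" using elim(1) xd by simp
    have "q * x ^ d \<le> q * ((1 / q) * \<bar>f x\<bar>)" by (rule mult_left_mono[OF a]) (use q in simp)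
    then have b: "q * x ^ d \<le> \<bar>f x\<bar>" using q by simp
    have "C * x ^ d * \<bar>(deriv ^^ d) f x\<bar> \<le> C * x ^ d * B"
      by (rule mult_left_mono[OF elim(3)]) (use C(1) xd in simp)
    with b elim(2) have "C * x ^ d * (\<bar>B\<bar> + 1) \<le> C * x ^ d * B" by (simp add: q_def algebra_simps)
    moreover have "C * x ^ d > 0" using C(1) xd by simp
    ultimately have "\<bar>B\<bar> + 1 \<le> B" by (simp add: mult_le_cancel_left_pos)
    then show False by linarith
  qed
  then show False by simp
qed

lemma lim0:
  assumes g: "goodp f 0 (real (d + 1))" and hi: "f \<in> o[at_top](\<lambda>t. t ^ (d + 1))"
  shows "((\<lambda>x. (deriv ^^ (d + 1)) f x) \<longlongrightarrow> 0) at_top"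
proof -
  from chain[OF g, of "d + 1"] obtain c where c: "c > 0"
    "eventually (\<lambda>x. c * x ^ (d + 1) * \<bar>(deriv ^^ (d + 1)) f x\<bar> \<le> \<bar>f x\<bar>) at_top" by auto
  show ?thesis unfolding tendsto_iff
  proof (intro allI impI)
    fix \<epsilon> :: real assume \<epsilon>: "\<epsilon> > 0"
    have ev: "eventually (\<lambda>x. norm (f x) \<le> (c * \<epsilon> / 2) * norm (x ^ (d + 1))) at_top"
      by (rule landau_o.smallD[OF hi]) (use c \<epsilon> in simp)
    show "eventually (\<lambda>x. dist ((deriv ^^ (d + 1)) f x) 0 < \<epsilon>) at_top"
      using ev c(2) eventually_gt_at_top[of 0]
    proof eventually_elim
      case (elim x)
      have xd: "x ^ (d + 1) > 0" using elim(3) by simp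
      have m: "(c * x ^ (d + 1)) * \<bar>(deriv ^^ (d + 1)) f x\<bar> \<le> (c * x ^ (d + 1)) * (\<epsilon> / 2)"
        using elim(1) elim(2) xd by (simp add: algebra_simps)
      have p: "c * x ^ (d + 1) > 0" using c(1) xd by simp
      have "\<bar>(deriv ^^ (d + 1)) f x\<bar> \<le> \<epsilon> / 2" using m unfolding mult_le_cancel_left_pos[OF p] .
      then show ?case using \<epsilon> by simp
    qed
  qed
qed


lemma caseB_next:
  assumes g: "goodp f 0 (real n)"
    and cs: "(n = d \<and> (\<lambda>t. t ^ d) \<in> o[at_top](f)) \<or> (n = d + 1 \<and> f \<in> o[at_top](\<lambda>t. t ^ (d + 1)))"
  shows "goodp f (Suc n) (-1)"
proof -
  have gnn: "goodp f n 0" using gn[OF g order_refl] by simp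
  from gnn have nz: "eventually (\<lambda>x. (deriv ^^ n) f x \<noteq> 0) at_top"
    and Rn: "((\<lambda>x. x * (deriv ^^ Suc n) f x / (deriv ^^ n) f x) \<longlongrightarrow> 0) at_top"
    unfolding goodp_def by blast+
  have Ln: "((\<lambda>x. ln \<bar>(deriv ^^ n) f x\<bar> / ln x) \<longlongrightarrow> 0) at_top" by (rule good_L[OF H fH gnn])
  have contra: "\<not> eventually (\<lambda>x. \<bar>(deriv ^^ Suc n) f x\<bar> \<le> x powr (-1-\<delta>)) at_top" if \<delta>: "\<delta> > 0" for \<delta>
  proof
    assume A: "eventually (\<lambda>x. \<bar>(deriv ^^ Suc n) f x\<bar> \<le> x powr (-1-\<delta>)) at_top"
    from cs show False
    proof
      assume "n = d \<and> (\<lambda>t. t ^ d) \<in> o[at_top](f)"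
      then have nd: "n = d" and lo: "(\<lambda>t. t ^ d) \<in> o[at_top](f)" by auto
      from int_bounded[OF Dd[OF H fH, of n] A \<delta>] obtain B where
        "eventually (\<lambda>x. \<bar>(deriv ^^ n) f x\<bar> \<le> B) at_top" by blast
      moreover have "goodp f 0 (real d)" using g nd by simp
      ultimately show False using unb[OF _ lo] nd by blast
    next
      assume "n = d + 1 \<and> f \<in> o[at_top](\<lambda>t. t ^ (d + 1))"
      then have nd: "n = d + 1" and hi: "f \<in> o[at_top](\<lambda>t. t ^ (d + 1))" by auto
      have "goodp f 0 (real (d + 1))" using g nd by simp
      from lim0[OF this hi] have l0: "((\<lambda>x. (deriv ^^ n) f x) \<longlongrightarrow> 0) at_top" using nd by simp
      from int_zero[OF Dd[OF H fH, of n] A \<delta> l0]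
      have up: "eventually (\<lambda>x. \<bar>(deriv ^^ n) f x\<bar> \<le> x powr (-\<delta>) / \<delta>) at_top" .
      have "eventually (\<lambda>x. - \<delta> / 2 < ln \<bar>(deriv ^^ n) f x\<bar> / ln x) at_top"
        by (rule order_tendstoD(1)[OF Ln]) (use \<delta> in simp)
      then have "eventually (\<lambda>x. - \<delta> / 2 \<le> ln \<bar>(deriv ^^ n) f x\<bar> / ln x) at_top"
        by eventually_elim simp
      from L_lb[OF this nz] have lb: "eventually (\<lambda>x. x powr (- \<delta> / 2) \<le> \<bar>(deriv ^^ n) f x\<bar>) at_top" .
      have "eventually (\<lambda>x. x powr (- \<delta> / 2) \<le> (1 / \<delta>) * x powr (-\<delta>)) at_top"
        using up lb by eventually_elim simp
      then show False by (rule powr_contra) (use \<delta> in simp)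
    qed
  qed
  have nz': "eventually (\<lambda>x. (deriv ^^ Suc n) f x \<noteq> 0) at_top"
    using sign_trichotomy[OF H Dg[OF H fH, of "Suc n"]]
  proof (elim disjE)
    assume "eventually (\<lambda>x. (deriv ^^ Suc n) f x = 0) at_top"
    then have "eventually (\<lambda>x. \<bar>(deriv ^^ Suc n) f x\<bar> \<le> x powr (-1-1)) at_top" by eventually_elim simp
    with contra[of 1] show ?thesis by simp
  qed (auto elim: eventually_mono)
  have Rsmall: "eventually (\<lambda>x. \<bar>x * (deriv ^^ Suc n) f x / (deriv ^^ n) f x\<bar> < 1) at_top"
    using tendstoD[OF Rn, of 1] by (simp add: dist_real_def)
  have lim: "((\<lambda>x. x * (deriv ^^ Suc (Suc n)) f x / (deriv ^^ Suc n) f x) \<longlongrightarrow> -1) at_top"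
  proof (rule order_tendstoI)
    fix y :: real assume y: "y < -1"
    define c' where "c' = (y + -1) / 2"
    have c': "y < c'" "c' < -1" using y by (simp_all add: c'_def)
    from Rsc[OF H fH, of c' "Suc n"]
    show "eventually (\<lambda>x. y < x * (deriv ^^ Suc (Suc n)) f x / (deriv ^^ Suc n) f x) at_top"
    proof
      assume "eventually (\<lambda>x. c' \<le> x * (deriv ^^ Suc (Suc n)) f x / (deriv ^^ Suc n) f x) at_top"
      then show ?thesis by eventually_elim (use c' in linarith)
    next
      assume "eventually (\<lambda>x. x * (deriv ^^ Suc (Suc n)) f x / (deriv ^^ Suc n) f x < c') at_top"
      then have "eventually (\<lambda>x. x * (deriv ^^ Suc (Suc n)) f x / (deriv ^^ Suc n) f x \<le> c') at_top"
        by eventually_elim simp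
      from grow_ub[OF Dd[OF H fH, of "Suc n"] nz' this, of "(c' + -1) / 2"] c'
      have "eventually (\<lambda>x. \<bar>(deriv ^^ Suc n) f x\<bar> \<le> x powr ((c' + -1) / 2)) at_top" by simp
      moreover have "(c' + -1) / 2 = -1 - ((-1 - c') / 2)" by (simp add: field_simps)
      ultimately have ev: "eventually (\<lambda>x. \<bar>(deriv ^^ Suc n) f x\<bar> \<le> x powr (-1 - ((-1 - c') / 2))) at_top"
        by metis
      have "(-1 - c') / 2 > 0" using c' by simp
      from contra[OF this] ev show ?thesis by blast
    qed
  next
    fix y :: real assume y: "-1 < y"
    define c' where "c' = (y - 1) / 2"
    have c': "c' < y" "-1 < c'" using y by (simp_all add: c'_def)
    from Rsc[OF H fH, of c' "Suc n"]
    show "eventually (\<lambda>x. x * (deriv ^^ Suc (Suc n)) f x / (deriv ^^ Suc n) f x < y) at_top"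
    proof
      assume "eventually (\<lambda>x. x * (deriv ^^ Suc (Suc n)) f x / (deriv ^^ Suc n) f x < c') at_top"
      then show ?thesis by eventually_elim (use c' in linarith)
    next
      assume A: "eventually (\<lambda>x. c' \<le> x * (deriv ^^ Suc (Suc n)) f x / (deriv ^^ Suc n) f x) at_top"
      define b' where "b' = (c' - 1) / 2"
      have b': "b' < c'" "-1 < b'" using c' by (simp_all add: b'_def)
      define \<eta> where "\<eta> = (b' + 1) / 2"
      have \<eta>: "\<eta> > 0" "\<eta> < b' + 1" using b' by (simp_all add: \<eta>_def)
      from grow_lb[OF Dd[OF H fH, of "Suc n"] nz' A b'(1)]
      have lb: "eventually (\<lambda>x. x powr b' \<le> \<bar>(deriv ^^ Suc n) f x\<bar>) at_top" .
      have "eventually (\<lambda>x. ln \<bar>(deriv ^^ n) f x\<bar> / ln x < \<eta>) at_top"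
        by (rule order_tendstoD(2)[OF Ln \<eta>(1)])
      then have "eventually (\<lambda>x. ln \<bar>(deriv ^^ n) f x\<bar> / ln x \<le> \<eta>) at_top" by eventually_elim simp
      from L_ub[OF this] have ub: "eventually (\<lambda>x. \<bar>(deriv ^^ n) f x\<bar> \<le> x powr \<eta>) at_top" .
      have "eventually (\<lambda>x. x powr (b' + 1) \<le> 1 * x powr \<eta>) at_top"
        using lb ub Rsmall nz eventually_gt_at_top[of 0]
      proof eventually_elim
        case (elim x)
        define r where "r = x * (deriv ^^ Suc n) f x / (deriv ^^ n) f x"
        have "r * (deriv ^^ n) f x = x * (deriv ^^ Suc n) f x" using elim(4) by (simp add: r_def)
        then have "\<bar>r\<bar> * \<bar>(deriv ^^ n) f x\<bar> = x * \<bar>(deriv ^^ Suc n) f x\<bar>"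
          using elim(5) by (metis abs_mult abs_of_pos)
        moreover have "\<bar>r\<bar> * \<bar>(deriv ^^ n) f x\<bar> \<le> 1 * x powr \<eta>"
          by (rule mult_mono) (use elim(2) elim(3) in \<open>auto simp: r_def less_imp_le\<close>)
        moreover have "x * x powr b' \<le> x * \<bar>(deriv ^^ Suc n) f x\<bar>"
          by (rule mult_left_mono[OF elim(1)]) (use elim(5) in simp)
        moreover have "x powr (b' + 1) = x * x powr b'" using elim(5) by (simp add: powr_add)
        ultimately show ?case by linarith
      qed
      then have False by (rule powr_contra) (use \<eta> in simp)
      then show ?thesis by simp
    qed
  qed
  show ?thesis unfolding goodp_def using nz' lim by simp
qed

end

context
  fixes H :: "(real \<Rightarrow> real) set" and f :: "real \<Rightarrow> real"
  assumes H: "standing_hardy_field H" and fH: "f \<in> H"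
begin

lemma B_base:
  assumes g1: "goodp f (Suc 0) (-1)" and lnf: "(\<lambda>t. ln t) \<in> o[at_top](f)"
  shows "\<forall>M. eventually (\<lambda>x. M \<le> ln \<bar>(deriv ^^ Suc 0) f x\<bar> + real (Suc 0) * ln x) at_top"
proof
  fix M :: real
  define Q where "Q = exp M"
  have Q: "Q > 0" by (simp add: Q_def)
  from g1 have nz1: "eventually (\<lambda>x. (deriv ^^ Suc 0) f x \<noteq> 0) at_top" unfolding goodp_def by blast
  have Gx: "germ_in (\<lambda>x. x * (deriv ^^ Suc 0) f x) H" by (rule germ_mult[OF H germ_id[OF H] Dg[OF H fH]])
  have G: "germ_in (\<lambda>x. (x * (deriv ^^ Suc 0) f x) * (x * (deriv ^^ Suc 0) f x)) H"
    by (rule germ_mult[OF H Gx Gx])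
  from sign_const[OF H G, of "Q * Q"]
  show "eventually (\<lambda>x. M \<le> ln \<bar>(deriv ^^ Suc 0) f x\<bar> + real (Suc 0) * ln x) at_top"
  proof
    assume A: "eventually (\<lambda>x. Q * Q \<le> (x * (deriv ^^ Suc 0) f x) * (x * (deriv ^^ Suc 0) f x)) at_top"
    show ?thesis using A nz1 eventually_gt_at_top[of 0]
    proof eventually_elim
      case (elim x)
      have "\<bar>Q\<bar> \<le> \<bar>x * (deriv ^^ Suc 0) f x\<bar>" using elim(1) by (simp add: abs_le_square_iff power2_eq_square)
      then have q: "Q \<le> x * \<bar>(deriv ^^ Suc 0) f x\<bar>" using Q elim(3) by (simp add: abs_mult)
      have p: "\<bar>(deriv ^^ Suc 0) f x\<bar> > 0" using elim(2) by simp
      have "ln Q \<le> ln (x * \<bar>(deriv ^^ Suc 0) f x\<bar>)" using q Q by simp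
      also have "\<dots> = ln x + ln \<bar>(deriv ^^ Suc 0) f x\<bar>" by (rule ln_mult_pos[OF elim(3) p])
      finally show ?case by (simp add: Q_def)
    qed
  next
    assume A: "eventually (\<lambda>x. (x * (deriv ^^ Suc 0) f x) * (x * (deriv ^^ Suc 0) f x) < Q * Q) at_top"
    have bd: "eventually (\<lambda>x. \<bar>x * (deriv ^^ Suc 0) f x\<bar> \<le> Q) at_top" using A
    proof eventually_elim
      case (elim x)
      then have "\<bar>x * (deriv ^^ Suc 0) f x\<bar> \<le> \<bar>Q\<bar>" by (simp add: abs_le_square_iff power2_eq_square)
      then show ?case using Q by simp
    qed
    from int_log[OF Dd[OF H fH, of 0] bd] obtain C where
      C: "eventually (\<lambda>x. \<bar>(deriv ^^ 0) f x\<bar> \<le> Q * ln x + C) at_top" by blast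
    have ev: "eventually (\<lambda>x. norm (ln x) \<le> (1 / (2 * Q)) * norm (f x)) at_top"
      by (rule landau_o.smallD[OF lnf]) (use Q in simp)
    have "eventually (\<lambda>x::real. False) at_top" using ev C ln_ev_ge[of "C / Q + 1"] eventually_gt_at_top[of 1]
    proof eventually_elim
      case (elim x)
      have l: "ln x > 0" using elim(4) by simp
      have "ln x \<le> (1 / (2 * Q)) * \<bar>f x\<bar>" using elim(1) l by simp
      also have "\<dots> \<le> (1 / (2 * Q)) * (Q * ln x + C)" by (rule mult_left_mono) (use elim(2) Q in simp_all)
      also have "\<dots> = ln x / 2 + (C / Q) / 2" using Q by (simp add: field_simps)
      finally have "ln x \<le> ln x / 2 + (C / Q) / 2" .
      then have "ln x / 2 \<le> (C / Q) / 2" by linarith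
      then have "ln x \<le> C / Q" by (simp add: divide_right_mono_neg field_simps)
      then show False using elim(3) by linarith
    qed
    then show ?thesis by simp
  qed
qed

lemma B_prop:
  assumes gk: "goodp f k (- real k)" and k: "k \<ge> 1"
    and B: "\<forall>M. eventually (\<lambda>x. M \<le> ln \<bar>(deriv ^^ k) f x\<bar> + real k * ln x) at_top"
  shows "\<forall>M. eventually (\<lambda>x. M \<le> ln \<bar>(deriv ^^ Suc k) f x\<bar> + real (Suc k) * ln x) at_top"
proof
  fix M
  from gk have nz: "eventually (\<lambda>x. (deriv ^^ k) f x \<noteq> 0) at_top"
    and R: "((\<lambda>x. x * (deriv ^^ Suc k) f x / (deriv ^^ k) f x) \<longlongrightarrow> - real k) at_top"
    unfolding goodp_def by blast+
  have e: "- real k \<noteq> 0" using k by simp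
  have rb: "eventually (\<lambda>x. \<bar>- real k\<bar> / 2 * \<bar>(deriv ^^ k) f x\<bar> \<le> x * \<bar>(deriv ^^ Suc k) f x\<bar> \<and>
       x * \<bar>(deriv ^^ Suc k) f x\<bar> \<le> 2 * \<bar>- real k\<bar> * \<bar>(deriv ^^ k) f x\<bar>) at_top"
    by (rule ratio_bounds[OF R e nz])
  show "eventually (\<lambda>x. M \<le> ln \<bar>(deriv ^^ Suc k) f x\<bar> + real (Suc k) * ln x) at_top"
    using B[rule_format, of "M - ln (real k / 2)"] rb nz eventually_gt_at_top[of 0]
  proof eventually_elim
    case (elim x)
    have k2: "real k / 2 > 0" using k by simp
    have p: "real k / 2 * \<bar>(deriv ^^ k) f x\<bar> > 0" using elim(3) k2 by simp
    have le: "real k / 2 * \<bar>(deriv ^^ k) f x\<bar> \<le> x * \<bar>(deriv ^^ Suc k) f x\<bar>" using elim(2) by simp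
    then have p2: "x * \<bar>(deriv ^^ Suc k) f x\<bar> > 0" using p by linarith
    then have p3: "\<bar>(deriv ^^ Suc k) f x\<bar> > 0" using elim(4) by (simp add: zero_less_mult_iff)
    have "ln (real k / 2 * \<bar>(deriv ^^ k) f x\<bar>) \<le> ln (x * \<bar>(deriv ^^ Suc k) f x\<bar>)"
      using le p p2 by simp
    moreover have "ln (real k / 2 * \<bar>(deriv ^^ k) f x\<bar>) = ln (real k / 2) + ln \<bar>(deriv ^^ k) f x\<bar>"
      by (rule ln_mult_pos[OF k2]) (use elim(3) in simp)
    moreover have "ln (x * \<bar>(deriv ^^ Suc k) f x\<bar>) = ln x + ln \<bar>(deriv ^^ Suc k) f x\<bar>"
      by (rule ln_mult_pos[OF elim(4) p3])
    moreover have "real (Suc k) * ln x = real k * ln x + ln x" by (simp add: algebra_simps)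
    ultimately show ?case using elim(1) by linarith
  qed
qed

lemma f_bounds:
  assumes snp: "strongly_nonpolynomial f"
  obtains d where "eventually (\<lambda>x. x powr real d \<le> \<bar>f x\<bar>) at_top"
    "eventually (\<lambda>x. \<bar>f x\<bar> \<le> x powr real (d + 1)) at_top"
    "(\<lambda>t. t ^ d) \<in> o[at_top](f)" "f \<in> o[at_top](\<lambda>t. t ^ (d + 1))"
proof -
  from snp obtain d where lo: "(\<lambda>t. t ^ d) \<in> o[at_top](f)" and hi: "f \<in> o[at_top](\<lambda>t. t ^ (d + 1))"
    unfolding strongly_nonpolynomial_def by blast
  have e1: "eventually (\<lambda>x. x powr real d \<le> \<bar>f x\<bar>) at_top"
    using landau_o.smallD[OF lo zero_less_one] eventually_gt_at_top[of 0]
  proof eventually_elim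
    case (elim x)
    have "x powr real d = x ^ d" using elim(2) by (rule powr_realpow)
    then show ?case using elim(1) elim(2) by simp
  qed
  have e2: "eventually (\<lambda>x. \<bar>f x\<bar> \<le> x powr real (d + 1)) at_top"
    using landau_o.smallD[OF hi zero_less_one] eventually_gt_at_top[of 0]
  proof eventually_elim
    case (elim x)
    have "x powr real (d + 1) = x ^ (d + 1)" using elim(2) by (rule powr_realpow)
    then show ?case using elim(1) elim(2) by simp
  qed
  show ?thesis using that e1 e2 lo hi by blast
qed

lemma caseB:
  assumes g: "goodp f 0 (real n)" and nd: "real d \<le> real n" "real n \<le> real d + 1"
    and lo: "(\<lambda>t. t ^ d) \<in> o[at_top](f)" and hi: "f \<in> o[at_top](\<lambda>t. t ^ (d + 1))"
    and lnf: "(\<lambda>t. ln t) \<in> o[at_top](f)"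
  shows "\<exists>K\<ge>1. \<forall>k\<ge>K. goodp f k (real n - real k) \<and> real n - real k < 0 \<and>
            (\<forall>M. eventually (\<lambda>x. M \<le> ln \<bar>(deriv ^^ k) f x\<bar> + real k * ln x) at_top)"
proof -
  have "d \<le> n" "n \<le> d + 1" using nd by simp_all
  then have "n = d \<or> n = d + 1" by arith
  then have cs: "(n = d \<and> (\<lambda>t. t ^ d) \<in> o[at_top](f)) \<or> (n = d + 1 \<and> f \<in> o[at_top](\<lambda>t. t ^ (d + 1)))"
    using lo hi by blast
  have g1: "goodp f (Suc n) (-1)" by (rule caseB_next[OF H fH g cs])
  have gk: "goodp f k (real n - real k)" if "k \<ge> Suc n" for k
  proof -
    define m where "m = k - Suc n"
    have km: "k = Suc n + m" using that by (simp add: m_def)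
    have "goodp f (Suc n + m) (-1 - real m)" by (rule good_iter[OF H fH g1]) auto
    then show ?thesis using km by (simp add: algebra_simps)
  qed
  have Bk: "\<forall>M. eventually (\<lambda>x. M \<le> ln \<bar>(deriv ^^ k) f x\<bar> + real k * ln x) at_top" if kn: "k \<ge> Suc n" for k
  proof (cases "n \<ge> 1")
    case True
    show ?thesis by (rule B_of_L[OF good_L[OF H fH gk[OF kn]]]) (use True in simp)
  next
    case False
    then have n0: "n = 0" by simp
    have g1': "goodp f (Suc 0) (-1)" using g1 n0 by simp
    have base: "\<forall>M. eventually (\<lambda>x. M \<le> ln \<bar>(deriv ^^ Suc 0) f x\<bar> + real (Suc 0) * ln x) at_top"
      by (rule B_base[OF g1' lnf])
    have all: "\<forall>M. eventually (\<lambda>x. M \<le> ln \<bar>(deriv ^^ Suc m) f x\<bar> + real (Suc m) * ln x) at_top" for m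
    proof (induction m)
      case 0 show ?case using base by simp
    next
      case (Suc m)
      have "goodp f (Suc m) (- real (Suc m))" using gk[of "Suc m"] n0 by simp
      from B_prop[OF this _ Suc.IH] show ?case by simp
    qed
    obtain m where "k = Suc m" using kn n0 by (cases k) auto
    then show ?thesis using all by simp
  qed
  show ?thesis
  proof (intro exI[of _ "Suc n"] conjI allI impI)
    show "1 \<le> Suc n" by simp
    fix k assume k: "Suc n \<le> k"
    show "goodp f k (real n - real k)" by (rule gk[OF k])
    show "real n - real k < 0" using k by simp
    show "eventually (\<lambda>x. M \<le> ln \<bar>(deriv ^^ k) f x\<bar> + real k * ln x) at_top" for M using Bk[OF k] by blast
  qed
qed

lemma main_props:
  assumes snp: "strongly_nonpolynomial f" and lnf: "(\<lambda>t. ln t) \<in> o[at_top](f)"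
  shows "\<exists>K\<ge>1. \<exists>a. \<forall>k\<ge>K. goodp f k (a - real k) \<and> a - real k < 0 \<and>
            (\<forall>M. eventually (\<lambda>x. M \<le> ln \<bar>(deriv ^^ k) f x\<bar> + real k * ln x) at_top)"
proof -
  obtain d where fl: "eventually (\<lambda>x. x powr real d \<le> \<bar>f x\<bar>) at_top"
    and fu: "eventually (\<lambda>x. \<bar>f x\<bar> \<le> x powr real (d + 1)) at_top"
    and lo: "(\<lambda>t. t ^ d) \<in> o[at_top](f)" and hi: "f \<in> o[at_top](\<lambda>t. t ^ (d + 1))"
    by (rule f_bounds[OF snp])
  obtain a where g: "goodp f 0 a" and ad: "real d \<le> a" "a \<le> real d + 1"
    using R0_limit[OF H fH fl fu] by blast
  show ?thesis
  proof (cases "\<exists>n::nat. a = real n")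
    case True
    then obtain n where an: "a = real n" by blast
    from caseB[OF _ _ _ lo hi lnf, of n] g ad an show ?thesis by blast
  next
    case False
    then have ni: "\<And>n::nat. a \<noteq> real n" by blast
    from caseA[OF H fH g ad ni] show ?thesis by blast
  qed
qed

end

theorem propositionA2:
  fixes H :: "(real \<Rightarrow> real) set" and f :: "real \<Rightarrow> real"
  assumes "standing_hardy_field H"
    and "f \<in> H"
    and "strongly_nonpolynomial f"
    and "(\<lambda>t. ln t) \<in> o[at_top](f)"
  shows "\<forall>\<^sub>F k in sequentially.
           (\<lambda>_. 1) \<in> o[at_top](\<lambda>t. \<bar>(deriv ^^ k) f t\<bar> powr (- 1 / real k)) \<and>
           (\<lambda>t. \<bar>(deriv ^^ k) f t\<bar> powr (- 1 / real k))
              \<in> o[at_top](\<lambda>t. \<bar>(deriv ^^ (k + 1)) f t\<bar> powr (- 1 / real (k + 1))) \<and>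
           (\<lambda>t. \<bar>(deriv ^^ (k + 1)) f t\<bar> powr (- 1 / real (k + 1))) \<in> o[at_top](\<lambda>t. t)"
proof -
  note H = assms(1) and fH = assms(2)
  from main_props[OF H fH assms(3) assms(4)] obtain K a where K: "K \<ge> 1" and
    P: "\<And>k. k \<ge> K \<Longrightarrow> goodp f k (a - real k) \<and> a - real k < 0 \<and>
            (\<forall>M. eventually (\<lambda>x. M \<le> ln \<bar>(deriv ^^ k) f x\<bar> + real k * ln x) at_top)"
    by blast
  show ?thesis unfolding eventually_sequentially
  proof (intro exI[of _ K] allI impI)
    fix k assume k: "K \<le> k"
    from P[OF k] have gk: "goodp f k (a - real k)" and neg: "a - real k < 0"
      and Bk: "\<forall>M. eventually (\<lambda>x. M \<le> ln \<bar>(deriv ^^ k) f x\<bar> + real k * ln x) at_top" by blast+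
    from P[of "Suc k"] k have gk1: "goodp f (Suc k) (a - real (Suc k))"
      and Bk1: "\<forall>M. eventually (\<lambda>x. M \<le> ln \<bar>(deriv ^^ Suc k) f x\<bar> + real (Suc k) * ln x) at_top" by auto
    from gk have nz: "eventually (\<lambda>x. (deriv ^^ k) f x \<noteq> 0) at_top"
      and R: "((\<lambda>x. x * (deriv ^^ Suc k) f x / (deriv ^^ k) f x) \<longlongrightarrow> a - real k) at_top"
      unfolding goodp_def by blast+
    from gk1 have nz1: "eventually (\<lambda>x. (deriv ^^ Suc k) f x \<noteq> 0) at_top"
      unfolding goodp_def by blast
    have Lk: "((\<lambda>x. ln \<bar>(deriv ^^ k) f x\<bar> / ln x) \<longlongrightarrow> a - real k) at_top" by (rule good_L[OF H fH gk])
    have kpos: "real k > 0" using k K by simp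
    have G1: "(\<lambda>_. 1::real) \<in> o[at_top](\<lambda>x. \<bar>(deriv ^^ k) f x\<bar> powr (-1 / real k))"
      by (rule final_G1[OF nz Lk neg kpos])
    have e: "a - real k \<noteq> 0" using neg by simp
    have rb: "eventually (\<lambda>x. \<bar>a - real k\<bar> / 2 * \<bar>(deriv ^^ k) f x\<bar> \<le> x * \<bar>(deriv ^^ Suc k) f x\<bar> \<and>
       x * \<bar>(deriv ^^ Suc k) f x\<bar> \<le> 2 * \<bar>a - real k\<bar> * \<bar>(deriv ^^ k) f x\<bar>) at_top"
      by (rule ratio_bounds[OF R e nz])
    have ratio: "eventually (\<lambda>x. x * \<bar>(deriv ^^ Suc k) f x\<bar> \<le> (2 * \<bar>a - real k\<bar>) * \<bar>(deriv ^^ k) f x\<bar>) at_top"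
      using rb by eventually_elim simp
    have A: "2 * \<bar>a - real k\<bar> > 0" using e by simp
    have G2: "(\<lambda>x. \<bar>(deriv ^^ k) f x\<bar> powr (-1 / real k)) \<in>
        o[at_top](\<lambda>x. \<bar>(deriv ^^ Suc k) f x\<bar> powr (-1 / (real k + 1)))"
      by (rule final_G2[OF nz nz1 ratio A Bk kpos])
    have Bk1': "\<forall>M. eventually (\<lambda>x. M \<le> ln \<bar>(deriv ^^ Suc k) f x\<bar> + (real k + 1) * ln x) at_top"
      using Bk1 by (simp add: add.commute)
    have G3: "(\<lambda>x. \<bar>(deriv ^^ Suc k) f x\<bar> powr (-1 / (real k + 1))) \<in> o[at_top](\<lambda>x. x)"
      by (rule final_G3[OF nz1 Bk1']) (use kpos in simp)
    have e1: "real (k + 1) = real k + 1" by simp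
    have e2: "k + 1 = Suc k" by simp
    have e3: "real (Suc k) = real k + 1" by simp
    show "(\<lambda>_. 1) \<in> o[at_top](\<lambda>t. \<bar>(deriv ^^ k) f t\<bar> powr (- 1 / real k)) \<and>
           (\<lambda>t. \<bar>(deriv ^^ k) f t\<bar> powr (- 1 / real k))
              \<in> o[at_top](\<lambda>t. \<bar>(deriv ^^ (k + 1)) f t\<bar> powr (- 1 / real (k + 1))) \<and>
           (\<lambda>t. \<bar>(deriv ^^ (k + 1)) f t\<bar> powr (- 1 / real (k + 1))) \<in> o[at_top](\<lambda>t. t)"
      unfolding e2 e3 using G1 G2 G3 by blast
  qed
qed

end
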